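(* For $n\ge 2$, the polynomials $P_n(x)$, $P_n^+(x)$, $P_n^-(x)$ all belong to ${\rm RZ}(-\infty,0)$, and $$P_{n+1}(x)\ll S_n(x),\qquad P^+_{n+1}(x)\prec S_n(x),\qquad S_n(x)\ll P^-_{n+1}(x).$$
   Context: For a permutation $\pi$ of $[n]=\{1,\dots,n\}$, ${\rm des}(\pi)=\#\{i\in[n-1]:\pi(i)>\pi(i+1)\}$. A double descent is an index $i\in[n-2]$ with $\pi(i)>\pi(i+1)>\pi(i+2)$; $\pi$ is simsun if for every $k\in[n]$ the subword of $\pi$ consisting of the letters in $[k]$ (in order of appearance) has no double descents. Let $\mathcal{RS}_n$ be the set of simsun permutations of $[n]$, $\mathcal{RS}_n^+=\{\pi\in\mathcal{RS}_n:\pi(1)>\pi(2)\}$, $\mathcal{RS}_n^-=\{\pi\in\mathcal{RS}_n:\pi(1)<\pi(2)\}$, and $S_n(x)=\sum_{\pi\in\mathcal{RS}_n}x^{{\rm des}(\pi)}$. An interior peak of $\pi$ is an index $i\in\{2,\dots,n-1\}$ with $\pi(i-1)<\pi(i)>\pi(i+1)$; ${\rm pk}(\pi)$ is their number. Let $P_n(x)=\sum_{\pi\in\mathcal{RS}_n}x^{{\rm pk}(\pi)}$, $P^\pm_n(x)=\sum_{\pi\in\mathcal{RS}^\pm_n}x^{{\rm pk}(\pi)}$. ${\rm RZ}(I)$ denotes the set of real polynomials all of whose zeros are real and lie in the interval $I$. For real-rooted $p,q$ with zeros $\xi_1\le\dots\le\xi_n$ of $p$ and $\theta_1\le\dots\le\theta_m$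 of $q$: $p$ interlaces $q$ (written $p\dagger q$) if $\deg q=1+\deg p$ and $\theta_1\le\xi_1\le\theta_2\le\cdots\le\xi_n\le\theta_{n+1}$; $p$ alternates left of $q$ (written $p\ll q$) if $\deg p=\deg q$ and $\xi_1\le\theta_1\le\xi_2\le\cdots\le\xi_n\le\theta_n$; $p\prec q$ means $p\dagger q$ or $p\ll q$. By convention $a\prec bx+c$ for any real constants $a,b,c$. *)

theory Defs
  imports "HOL-Computational_Algebra.Polynomial" "HOL-Combinatorics.Multiset_Permutations"
begin

(* A permutation pi of [n] is represented by its one-line notation: the list
   [pi(1), ..., pi(n)], i.e. an element of permutations_of_set {1..n}.
   List indices are 0-based, so pi(i) = xs ! (i-1). *)

definition des :: "nat list \<Rightarrow> nat" where
  "des xs = card {i. i + 1 < length xs \<and> xs ! i > xs ! (i + 1)}"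

definition has_double_descent :: "nat list \<Rightarrow> bool" where
  "has_double_descent xs \<longleftrightarrow>
     (\<exists>i. i + 2 < length xs \<and> xs ! i > xs ! (i + 1) \<and> xs ! (i + 1) > xs ! (i + 2))"

definition simsun :: "nat \<Rightarrow> nat list \<Rightarrow> bool" where
  "simsun n xs \<longleftrightarrow> (\<forall>k\<in>{1..n}. \<not> has_double_descent (filter (\<lambda>x. x \<le> k) xs))"

definition RS :: "nat \<Rightarrow> nat list set" where
  "RS n = {xs \<in> permutations_of_set {1..n}. simsun n xs}"

definition RS_plus :: "nat \<Rightarrow> nat list set" where
  "RS_plus n = {xs \<in> RS n. xs ! 0 > xs ! 1}"

definition RS_minus :: "nat \<Rightarrow> nat list set" where
  "RS_minus n = {xs \<in> RS n. xs ! 0 < xs ! 1}"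

(* interior peaks: 1-based index i in {2..n-1}, i.e. 0-based j with 0 < j, j+1 < n *)
definition pk :: "nat list \<Rightarrow> nat" where
  "pk xs = card {j. 0 < j \<and> j + 1 < length xs \<and> xs ! (j - 1) < xs ! j \<and> xs ! j > xs ! (j + 1)}"

definition S_poly :: "nat \<Rightarrow> real poly" where
  "S_poly n = (\<Sum>xs\<in>RS n. monom 1 (des xs))"

definition P_poly :: "nat \<Rightarrow> real poly" where
  "P_poly n = (\<Sum>xs\<in>RS n. monom 1 (pk xs))"

definition P_plus :: "nat \<Rightarrow> real poly" where
  "P_plus n = (\<Sum>xs\<in>RS_plus n. monom 1 (pk xs))"

definition P_minus :: "nat \<Rightarrow> real poly" where
  "P_minus n = (\<Sum>xs\<in>RS_minus n. monom 1 (pk xs))"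

definition RZ :: "real set \<Rightarrow> real poly \<Rightarrow> bool" where
  "RZ I p \<longleftrightarrow> p \<noteq> 0 \<and>
     (\<forall>z::complex. poly (map_poly complex_of_real p) z = 0 \<longrightarrow> (\<exists>x\<in>I. z = complex_of_real x))"

definition zero_list :: "real poly \<Rightarrow> real list \<Rightarrow> bool" where
  "zero_list p xs \<longleftrightarrow> sorted xs \<and> length xs = degree p \<and>
     p = smult (lead_coeff p) (\<Prod>x\<leftarrow>xs. [:- x, 1:])"

definition interlaces :: "real poly \<Rightarrow> real poly \<Rightarrow> bool" where
  "interlaces p q \<longleftrightarrow> degree q = degree p + 1 \<and>
     (\<exists>\<xi> \<theta>. zero_list p \<xi> \<and> zero_list q \<theta> \<and>
        (\<forall>i<length \<xi>. \<theta> ! i \<le> \<xi> ! i \<and> \<xi> ! i \<le> \<theta> ! (i + 1)))"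

definition alternates_left :: "real poly \<Rightarrow> real poly \<Rightarrow> bool" where
  "alternates_left p q \<longleftrightarrow> degree p = degree q \<and>
     (\<exists>\<xi> \<theta>. zero_list p \<xi> \<and> zero_list q \<theta> \<and>
        (\<forall>i<length \<xi>. \<xi> ! i \<le> \<theta> ! i \<and> (i + 1 < length \<xi> \<longrightarrow> \<theta> ! i \<le> \<xi> ! (i + 1))))"

(* p \<prec> q, including the convention a \<prec> bx + c for real constants a, b, c *)
definition prec :: "real poly \<Rightarrow> real poly \<Rightarrow> bool" where
  "prec p q \<longleftrightarrow> interlaces p q \<or> alternates_left p q \<or> (degree p = 0 \<and> degree q \<le> 1)"

end

theory Submission
  imports Defs
begin

fun desc :: "nat list \<Rightarrow> nat" where
  "desc (a # b # r) = (if b < a then 1 else 0) + desc (b # r)"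
| "desc _ = 0"

fun ddf :: "nat list \<Rightarrow> bool" where
  "ddf (a # b # c # r) = ((b < a \<and> c < b) \<or> ddf (b # c # r))"
| "ddf _ = False"

lemma des_Cons_Cons: "des (a#b#r) = (if b<a then 1 else 0) + des (b#r)"
proof -
  let ?D = "\<lambda>xs::nat list. {i. i + 1 < length xs \<and> xs ! i > xs ! (i + 1)}"
  have eq: "?D (a#b#r) = (if b<a then {0} else {}) \<union> Suc ` ?D (b#r)"
  proof (rule set_eqI)
    fix i show "i \<in> ?D (a#b#r) \<longleftrightarrow> i \<in> (if b<a then {0} else {}) \<union> Suc ` ?D (b#r)"
      by (cases i) (auto simp: image_iff)
  qed
  have fin: "finite (?D (b#r))" by (rule finite_subset[of _ "{..<length (b#r)}"]) auto
  show ?thesis unfolding des_def eq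
    using fin by (auto simp: card_image)
qed

lemma des_short: "length xs < 2 \<Longrightarrow> des xs = 0"
  unfolding des_def by (auto)

lemma des_desc: "des xs = desc xs"
  by (induction xs rule: desc.induct) (simp_all add: des_Cons_Cons des_short)

lemma hdd_Cons: "has_double_descent (a#b#c#r) = ((b < a \<and> c < b) \<or> has_double_descent (b # c # r))"
  unfolding has_double_descent_def
proof
  assume "\<exists>i. i + 2 < length (a # b # c # r) \<and> (a # b # c # r) ! (i + 1) < (a # b # c # r) ! i \<and>
        (a # b # c # r) ! (i + 2) < (a # b # c # r) ! (i + 1)"
  then obtain i where i: "i + 2 < length (a # b # c # r) \<and> (a # b # c # r) ! (i + 1) < (a # b # c # r) ! i \<and>
        (a # b # c # r) ! (i + 2) < (a # b # c # r) ! (i + 1)" by blast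
  show "b < a \<and> c < b \<or> (\<exists>i. i + 2 < length (b # c # r) \<and> (b # c # r) ! (i + 1) < (b # c # r) ! i \<and> (b # c # r) ! (i + 2) < (b # c # r) ! (i + 1))"
  proof (cases i)
    case 0 then show ?thesis using i by auto
  next
    case (Suc j) then show ?thesis using i by (intro disjI2 exI[of _ j]) auto
  qed
next
  assume "b < a \<and> c < b \<or> (\<exists>i. i + 2 < length (b # c # r) \<and> (b # c # r) ! (i + 1) < (b # c # r) ! i \<and> (b # c # r) ! (i + 2) < (b # c # r) ! (i + 1))"
  then show "\<exists>i. i + 2 < length (a # b # c # r) \<and> (a # b # c # r) ! (i + 1) < (a # b # c # r) ! i \<and>
        (a # b # c # r) ! (i + 2) < (a # b # c # r) ! (i + 1)"
  proof
    assume "b < a \<and> c < b" then show ?thesis by (intro exI[of _ 0]) auto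
  next
    assume "\<exists>i. i + 2 < length (b # c # r) \<and> (b # c # r) ! (i + 1) < (b # c # r) ! i \<and> (b # c # r) ! (i + 2) < (b # c # r) ! (i + 1)"
    then obtain i where "i + 2 < length (b # c # r) \<and> (b # c # r) ! (i + 1) < (b # c # r) ! i \<and> (b # c # r) ! (i + 2) < (b # c # r) ! (i + 1)" by blast
    then show ?thesis by (intro exI[of _ "Suc i"]) auto
  qed
qed

lemma hdd_short: "length xs < 3 \<Longrightarrow> \<not> has_double_descent xs"
  unfolding has_double_descent_def by auto

lemma hdd_ddf: "has_double_descent xs = ddf xs"
  by (induction xs rule: ddf.induct) (simp_all add: hdd_Cons hdd_short)

lemma desc_app: "desc (xs @ ys) = desc xs + desc ys + (if xs \<noteq> [] \<and> ys \<noteq> [] \<and> hd ys < last xs then 1 else 0)"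
proof (induction xs rule: induct_list012)
  case 1 then show ?case by simp
next
  case (2 x) then show ?case by (cases ys) auto
next
  case (3 x y zs) then show ?case by auto
qed

lemma ddf_app1: "ddf xs \<Longrightarrow> ddf (xs @ ys)"
  by (induction xs rule: ddf.induct) auto

lemma ddf_app2: "ddf ys \<Longrightarrow> ddf (xs @ ys)"
proof (induction xs rule: induct_list012)
  case (2 x) then show ?case by (cases ys rule: ddf.cases) auto
next
  case (3 x y zs) then show ?case by (cases "zs @ ys" rule: ddf.cases) auto
qed simp

lemma ddf_max: "(\<forall>x\<in>set xs. x < m) \<Longrightarrow> (\<forall>y\<in>set ys. y < m) \<Longrightarrow>
   ddf (xs @ m # ys) = (ddf xs \<or> ddf ys \<or> (\<exists>y1 y2 r. ys = y1 # y2 # r \<and> y2 < y1))"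
proof (induction xs rule: induct_list012)
  case 1 then show ?case by (cases ys rule: ddf.cases) auto
next
  case (2 x) then show ?case by (cases ys rule: ddf.cases) auto
next
  case (3 x y zs) then show ?case by (cases zs rule: ddf.cases) auto
qed

lemma desc_max: "(\<forall>x\<in>set xs. x < m) \<Longrightarrow> (\<forall>y\<in>set ys. y < m) \<Longrightarrow>
   desc (xs @ m # ys) = desc xs + (if ys = [] then 0 else 1) + desc ys"
  by (cases ys) (auto simp: desc_app, (metis last_in_set less_asym)+)

definition ins :: "nat \<Rightarrow> nat \<Rightarrow> nat list \<Rightarrow> nat list" where
  "ins m j w = take j w @ m # drop j w"

definition Al :: "nat list \<Rightarrow> nat set" where
  "Al w = {j. j \<le> length w \<and> \<not> (j + 1 < length w \<and> w ! (j + 1) < w ! j)}"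

lemma perm_len: "w \<in> permutations_of_set {1..n} \<Longrightarrow> length w = n"
  by (metis card_atLeastAtMost diff_Suc_1 distinct_card permutations_of_setD)

lemma ins_inj: "inj_on (\<lambda>(w,j). ins (Suc n) j w) (permutations_of_set {1..n} \<times> {0..n})"
proof (rule inj_onI, clarify)
  fix w j w' j'
  assume w: "w \<in> permutations_of_set {1..n}" and j: "j \<in> {0..n}"
    and w': "w' \<in> permutations_of_set {1..n}" and j': "j' \<in> {0..n}"
    and eq: "ins (Suc n) j w = ins (Suc n) j' w'"
  have nw: "Suc n \<notin> set w" "Suc n \<notin> set w'" using w w' by (auto dest: permutations_of_setD)
  have "Suc n \<notin> set (take j w)" "Suc n \<notin> set (drop j w)"
    using nw by (meson in_set_takeD in_set_dropD)+
  with eq have tk: "take j w = take j' w' \<and> drop j w = drop j' w'"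
    unfolding ins_def by (subst (asm) append_Cons_eq_iff) auto
  have lens: "length w = n" "length w' = n" using w w' by (simp_all add: perm_len)
  from tk have "take j w @ drop j w = take j' w' @ drop j' w'" by simp
  then have ww: "w = w'" by simp
  from tk have "length (take j w) = length (take j' w')" by simp
  then have "j = j'" using j j' lens by simp
  with ww show "w = w' \<and> j = j'" by simp
qed

lemma ins_perm: "permutations_of_set {1..Suc n} = (\<lambda>(w,j). ins (Suc n) j w) ` (permutations_of_set {1..n} \<times> {0..n})"
proof (rule set_eqI, rule iffI)
  fix p assume p: "p \<in> permutations_of_set {1..Suc n}"
  then have sp: "set p = {1..Suc n}" and dp: "distinct p" by (auto dest: permutations_of_setD)
  then have "Suc n \<in> set p" by auto
  then obtain xs ys where pxs: "p = xs @ Suc n # ys" by (meson split_list)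
  let ?w = "xs @ ys"
  have "set ?w = {1..n}"
  proof -
    have "set ?w = set p - {Suc n}" using dp pxs by auto
    then show ?thesis using sp by (simp add: atLeastAtMostSuc_conv)
  qed
  moreover have "distinct ?w" using dp pxs by auto
  ultimately have wp: "?w \<in> permutations_of_set {1..n}" by auto
  then have "length ?w = n" by (rule perm_len)
  then have "length xs \<in> {0..n}" by auto
  moreover have "p = ins (Suc n) (length xs) ?w" using pxs by (simp add: ins_def)
  ultimately show "p \<in> (\<lambda>(w,j). ins (Suc n) j w) ` (permutations_of_set {1..n} \<times> {0..n})"
    using wp by (auto intro!: image_eqI[of _ _ "(?w, length xs)"])
next
  fix p assume "p \<in> (\<lambda>(w,j). ins (Suc n) j w) ` (permutations_of_set {1..n} \<times> {0..n})"
  then obtain w j where w: "w \<in> permutations_of_set {1..n}" and p: "p = ins (Suc n) j w" by auto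
  have sw: "set w = {1..n}" "distinct w" using w by (auto dest: permutations_of_setD)
  have "set p = insert (Suc n) (set w)" unfolding p ins_def
    by (metis Un_insert_right append_take_drop_id list.simps(15) set_append)
  moreover have "distinct p"
  proof -
    have dd: "distinct (take j w @ drop j w)" using sw by simp
    have nw: "Suc n \<notin> set w" using sw(1) by auto
    have "Suc n \<notin> set (take j w)" "Suc n \<notin> set (drop j w)" using nw
      by (auto dest: in_set_takeD in_set_dropD)
    then show ?thesis unfolding p ins_def using dd by (simp only: distinct_append) auto
  qed
  ultimately show "p \<in> permutations_of_set {1..Suc n}" using sw
    by (intro permutations_of_setI) (auto simp: atLeastAtMostSuc_conv)
qed

lemma filter_ins_le: "k \<le> n \<Longrightarrow> filter (\<lambda>x. x \<le> k) (ins (Suc n) j w) = filter (\<lambda>x. x \<le> k) w"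
proof -
  assume k: "k \<le> n"
  have "filter (\<lambda>x. x \<le> k) (ins (Suc n) j w) = filter (\<lambda>x. x \<le> k) (take j w) @ filter (\<lambda>x. x \<le> k) (drop j w)"
    unfolding ins_def using k by simp
  also have "\<dots> = filter (\<lambda>x. x \<le> k) (take j w @ drop j w)" by (simp only: filter_append)
  finally show ?thesis by simp
qed

lemma drop_two: "(\<exists>y1 y2 r. drop j w = y1 # y2 # r \<and> y2 < y1) \<longleftrightarrow> (j + 1 < length w \<and> w ! (j+1) < w ! j)"
proof (cases "j + 1 < length w")
  case True
  then have "drop j w = w ! j # w ! (j+1) # drop (Suc (Suc j)) w"
    by (metis Cons_nth_drop_Suc Suc_eq_plus1 Suc_lessD)
  then show ?thesis using True by auto
next
  case False
  then have l1: "length (drop j w) \<le> 1" by simp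
  have "\<not> (drop j w = y1 # y2 # r)" for y1 y2 r
  proof
    assume "drop j w = y1 # y2 # r"
    then have "length (drop j w) = Suc (Suc (length r))" by simp
    then show False using l1 by simp
  qed
  then show ?thesis using False by auto
qed

lemma simsun_no_dd: "simsun n w \<Longrightarrow> set w \<subseteq> {1..n} \<Longrightarrow> n \<ge> 1 \<Longrightarrow> \<not> ddf w"
proof -
  assume s: "simsun n w" and sw: "set w \<subseteq> {1..n}" and n: "n \<ge> 1"
  have "filter (\<lambda>x. x \<le> n) w = w" using sw by (auto simp: filter_id_conv)
  with s n show ?thesis unfolding simsun_def hdd_ddf by (metis atLeastAtMost_iff order_refl)
qed

lemma simsun_ins:
  assumes w: "w \<in> permutations_of_set {1..n}" and n: "n \<ge> 1"
  shows "simsun (Suc n) (ins (Suc n) j w) \<longleftrightarrow> simsun n w \<and> \<not> (j + 1 < length w \<and> w ! (j+1) < w ! j)"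
proof -
  let ?p = "ins (Suc n) j w"
  have sw: "set w = {1..n}" using w by (auto dest: permutations_of_setD)
  have sp: "set ?p \<subseteq> {1..Suc n}" unfolding ins_def using sw
    by (auto dest: in_set_takeD in_set_dropD)
  have fp: "filter (\<lambda>x. x \<le> Suc n) ?p = ?p" using sp by (auto simp: filter_id_conv)
  have A: "simsun (Suc n) ?p \<longleftrightarrow> simsun n w \<and> \<not> ddf ?p"
  proof -
    have "{1..Suc n} = insert (Suc n) {1..n}" by auto
    then have "simsun (Suc n) ?p \<longleftrightarrow> (\<forall>k\<in>{1..n}. \<not> has_double_descent (filter (\<lambda>x. x \<le> k) ?p)) \<and> \<not> has_double_descent ?p"
      unfolding simsun_def using fp by auto
    also have "(\<forall>k\<in>{1..n}. \<not> has_double_descent (filter (\<lambda>x. x \<le> k) ?p)) \<longleftrightarrow> simsun n w"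
      unfolding simsun_def using filter_ins_le by auto
    finally show ?thesis by (simp add: hdd_ddf)
  qed
  show ?thesis
  proof (cases "simsun n w")
    case False then show ?thesis using A by simp
  next
    case True
    then have nd: "\<not> ddf w" using simsun_no_dd[OF True _ n] sw by simp
    have nd1: "\<not> ddf (take j w)" "\<not> ddf (drop j w)" using nd ddf_app1[of "take j w" "drop j w"] ddf_app2[of "drop j w" "take j w"]
      by auto
    have "ddf ?p = (ddf (take j w) \<or> ddf (drop j w) \<or> (\<exists>y1 y2 r. drop j w = y1 # y2 # r \<and> y2 < y1))"
      unfolding ins_def using sw by (intro ddf_max) (auto dest: in_set_takeD in_set_dropD)
    then have "ddf ?p \<longleftrightarrow> (j+1 < length w \<and> w!(j+1) < w!j)" using nd1 drop_two[of j w] by blast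
    then show ?thesis using A True by simp
  qed
qed

lemma des_ins:
  assumes "\<forall>x\<in>set w. x < m" "j \<le> length w"
  shows "des (ins m j w) + (if 0 < j \<and> j < length w \<and> w ! j < w ! (j - 1) then 1 else 0)
       = des w + (if j < length w then 1 else 0)"
proof -
  have a: "\<forall>x\<in>set (take j w). x < m" "\<forall>x\<in>set (drop j w). x < m" using assms(1)
    by (auto dest: in_set_takeD in_set_dropD)
  have 1: "desc (ins m j w) = desc (take j w) + (if drop j w = [] then 0 else 1) + desc (drop j w)"
    unfolding ins_def using a by (rule desc_max)
  have 2: "desc w = desc (take j w) + desc (drop j w) + (if take j w \<noteq> [] \<and> drop j w \<noteq> [] \<and> hd (drop j w) < last (take j w) then 1 else 0)"
    using desc_app[of "take j w" "drop j w"] by simp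
  have 3: "take j w \<noteq> [] \<and> drop j w \<noteq> [] \<and> hd (drop j w) < last (take j w) \<longleftrightarrow> 0 < j \<and> j < length w \<and> w ! j < w ! (j - 1)"
  proof (cases "0 < j \<and> j < length w")
    case True
    then have "take j w = take (j - 1) w @ [w ! (j - 1)]"
      by (metis Suc_diff_1 Suc_lessD diff_less less_trans_Suc take_Suc_conv_app_nth zero_less_one)
    then have "last (take j w) = w ! (j - 1)" by simp
    moreover have "hd (drop j w) = w ! j" using True by (simp add: hd_drop_conv_nth)
    ultimately show ?thesis using True by auto
  next
    case False then show ?thesis by auto
  qed
  have 4: "drop j w = [] \<longleftrightarrow> \<not> j < length w" by (simp add: not_less)
  show ?thesis unfolding des_desc 1 2 3[symmetric] 4 by simp
qed

lemma ins_0: "ins m 0 w = m # w" by (simp add: ins_def)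
lemma ins_1: "w \<noteq> [] \<Longrightarrow> ins m 1 w = w ! 0 # m # drop 1 w"
  by (cases w) (auto simp: ins_def)
lemma ins_ge2: "2 \<le> j \<Longrightarrow> 2 \<le> length w \<Longrightarrow> ins m j w ! 0 = w ! 0 \<and> ins m j w ! 1 = w ! 1"
proof -
  assume j: "2 \<le> j" and l: "2 \<le> length w"
  obtain a b r where w: "w = a # b # r" using l by (auto simp: numeral_2_eq_2 Suc_le_length_iff)
  obtain k where k: "j = Suc (Suc k)" using j by (metis add_2_eq_Suc le_Suc_ex)
  show ?thesis unfolding k w ins_def by simp
qed



definition Dset :: "nat list \<Rightarrow> nat set" where
  "Dset w = {i. i + 1 < length w \<and> w ! i > w ! (i + 1)}"

lemma des_card: "des w = card (Dset w)" unfolding des_def Dset_def by simp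

lemma finite_Dset: "finite (Dset w)" unfolding Dset_def
  by (rule finite_subset[of _ "{..<length w}"]) auto

lemma finite_Al: "finite (Al w)" unfolding Al_def
  by (rule finite_subset[of _ "{..length w}"]) auto

lemma Al_char: "Al w = {0..length w} - Dset w"
  unfolding Al_def Dset_def by auto

lemma Dset_sub: "Dset w \<subseteq> {0..length w}" unfolding Dset_def by auto

lemma Suc_D_sub: "\<not> ddf w \<Longrightarrow> Suc ` Dset w \<subseteq> Al w"
proof
  fix j assume nd: "\<not> ddf w" and "j \<in> Suc ` Dset w"
  then obtain i where i: "i \<in> Dset w" "j = Suc i" by auto
  show "j \<in> Al w"
  proof (rule ccontr)
    assume "j \<notin> Al w"
    then have "j + 1 < length w \<and> w ! (j + 1) < w ! j" using i unfolding Al_def Dset_def by auto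
    then have "has_double_descent w" unfolding has_double_descent_def using i unfolding Dset_def
      by (intro exI[of _ i]) auto
    then show False using nd by (simp add: hdd_ddf)
  qed
qed

lemma len_Al: "length w \<in> Al w" unfolding Al_def by auto
lemma len_notin: "length w \<notin> Suc ` Dset w" unfolding Dset_def by auto

lemma des_ins_val:
  assumes "\<forall>x\<in>set w. x < m" "j \<in> Al w"
  shows "des (ins m j w) = (if j \<in> Suc ` Dset w \<or> j = length w then des w else Suc (des w))"
proof -
  have jl: "j \<le> length w" using assms(2) unfolding Al_def by auto
  note e = des_ins[OF assms(1) jl]
  show ?thesis
  proof (cases "j \<in> Suc ` Dset w")
    case True
    then obtain i where "i \<in> Dset w" "j = Suc i" by auto
    then have "0 < j \<and> j < length w \<and> w ! j < w ! (j - 1)" unfolding Dset_def by auto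
    then show ?thesis using e True by auto
  next
    case False
    show ?thesis
    proof (cases "j = length w")
      case True then show ?thesis using e by auto
    next
      case jn: False
      have "\<not> (0 < j \<and> j < length w \<and> w ! j < w ! (j - 1))"
      proof
        assume h: "0 < j \<and> j < length w \<and> w ! j < w ! (j - 1)"
        then have "j - 1 \<in> Dset w" unfolding Dset_def by auto
        then have "Suc (j - 1) \<in> Suc ` Dset w" by blast
        then show False using False h by simp
      qed
      then show ?thesis using e False jn jl by auto
    qed
  qed
qed

lemma RS_facts:
  assumes "w \<in> RS n" "n \<ge> 1"
  shows "length w = n" "distinct w" "set w = {1..n}" "\<not> ddf w" "simsun n w"
    "\<forall>x\<in>set w. x < Suc n"
proof -
  have p: "w \<in> permutations_of_set {1..n}" and s: "simsun n w" using assms(1) unfolding RS_def by auto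
  show "length w = n" using p by (rule perm_len)
  show "distinct w" "set w = {1..n}" using p by (auto dest: permutations_of_setD)
  then show "\<not> ddf w" using simsun_no_dd[OF s] assms(2) by simp
  show "simsun n w" by (rule s)
  show "\<forall>x\<in>set w. x < Suc n" using \<open>set w = {1..n}\<close> by auto
qed

lemma sum_const_smult: "(\<Sum>x\<in>A. (c :: real poly)) = smult (of_nat (card A)) c"
  by (simp add: of_nat_poly)

lemma T_sum:
  assumes w: "w \<in> RS n" and n: "n \<ge> 1"
  shows "(\<Sum>j\<in>Al w. monom (1::real) (des (ins (Suc n) j w)))
    = smult (of_nat (des w) + 1) (monom 1 (des w)) + smult (of_nat n - 2 * of_nat (des w)) (monom 1 (Suc (des w)))"
proof -
  note F = RS_facts[OF w n]
  let ?d = "des w"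
  let ?P = "\<lambda>j. j \<in> Suc ` Dset w \<or> j = length w"
  have "(\<Sum>j\<in>Al w. monom (1::real) (des (ins (Suc n) j w))) = (\<Sum>j\<in>Al w. if ?P j then monom 1 ?d else monom 1 (Suc ?d))"
    by (rule sum.cong) (auto simp: des_ins_val[OF F(6)])
  also have "\<dots> = (\<Sum>j\<in>Al w \<inter> {j. ?P j}. monom 1 ?d) + (\<Sum>j\<in>Al w \<inter> - {j. ?P j}. monom 1 (Suc ?d))"
    by (rule sum.If_cases) (rule finite_Al)
  finally have eq: "(\<Sum>j\<in>Al w. monom (1::real) (des (ins (Suc n) j w))) =
     smult (of_nat (card (Al w \<inter> {j. ?P j}))) (monom 1 ?d) + smult (of_nat (card (Al w \<inter> - {j. ?P j}))) (monom 1 (Suc ?d))"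
    by (simp only: sum_const_smult)
  have s1: "Al w \<inter> {j. ?P j} = insert (length w) (Suc ` Dset w)"
    using Suc_D_sub[OF F(4)] len_Al by auto
  have c1: "card (Al w \<inter> {j. ?P j}) = ?d + 1"
    unfolding s1 using len_notin finite_Dset by (simp add: card_image des_card)
  have s2: "Al w \<inter> - {j. ?P j} = Al w - (Al w \<inter> {j. ?P j})" by auto
  have cA: "card (Al w) + ?d = length w + 1"
  proof -
    have "card (Al w) = card {0..length w} - card (Dset w)"
      unfolding Al_char by (rule card_Diff_subset[OF finite_Dset Dset_sub])
    moreover have "card (Dset w) \<le> card {0..length w}" by (rule card_mono[OF _ Dset_sub]) simp
    ultimately show ?thesis by (simp add: des_card)
  qed
  have sub: "Al w \<inter> {j. ?P j} \<subseteq> Al w" by auto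
  have c2: "card (Al w \<inter> - {j. ?P j}) = card (Al w) - (?d + 1)"
    unfolding s2 using card_Diff_subset[OF finite_subset[OF sub finite_Al] sub] c1 by simp
  have le: "?d + 1 \<le> card (Al w)" using card_mono[OF finite_Al sub] c1 by simp
  have c2r: "(of_nat (card (Al w \<inter> - {j. ?P j})) :: real) = of_nat n - 2 * of_nat ?d"
    using c2 le cA F(1) by (simp add: of_nat_diff)
  show ?thesis unfolding eq c1 c2r by (simp add: add.commute)
qed

lemma G_sum:
  assumes w: "w \<in> RS n" and n: "n \<ge> 2"
  shows "(\<Sum>j\<in>Al w. if ins (Suc n) j w ! 1 < ins (Suc n) j w ! 0 then monom (1::real) (des (ins (Suc n) j w)) else 0)
    = (if w ! 1 < w ! 0 then (\<Sum>j\<in>Al w. monom (1::real) (des (ins (Suc n) j w))) - monom 1 (des w)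
       else monom 1 (Suc (des w)))"
proof -
  have n1: "n \<ge> 1" using n by simp
  note F = RS_facts[OF w n1]
  let ?f = "\<lambda>j. monom (1::real) (des (ins (Suc n) j w))"
  have wne: "w \<noteq> []" using F(1) n by auto
  have l2: "2 \<le> length w" using F(1) n by simp
  have w01: "w ! 0 \<noteq> w ! 1" using nth_eq_iff_index_eq[of w 0 1] F(2) l2 wne by simp
  have w0: "w ! 0 < Suc n" using F(6) wne by (simp add: nth_mem)
  show ?thesis
  proof (cases "w ! 1 < w ! 0")
    case True
    have D0: "0 \<in> Dset w" using True l2 unfolding Dset_def by auto
    then have A1: "1 \<in> Al w" using Suc_D_sub[OF F(4)] by force
    have f1: "?f 1 = monom 1 (des w)"
      using des_ins_val[OF F(6) A1] D0 by force
    have "(\<Sum>j\<in>Al w. if ins (Suc n) j w ! 1 < ins (Suc n) j w ! 0 then ?f j else 0)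
        = (\<Sum>j\<in>Al w. if j = 1 then 0 else ?f j)"
    proof (rule sum.cong)
      fix j assume j: "j \<in> Al w"
      have j0: "j \<noteq> 0" using j D0 unfolding Al_char by (metis DiffD2)
      show "(if ins (Suc n) j w ! 1 < ins (Suc n) j w ! 0 then ?f j else 0) = (if j = 1 then 0 else ?f j)"
      proof (cases "j = 1")
        case True then show ?thesis using wne w0 ins_1[OF wne, of "Suc n"] by simp
      next
        case False
        then have "2 \<le> j" using j0 by simp
        then show ?thesis using ins_ge2[OF _ l2] True False by simp
      qed
    qed simp
    also have "\<dots> = (\<Sum>j\<in>Al w - {1}. ?f j)"
      using sum.remove[OF finite_Al A1, of "\<lambda>j. if j = 1 then 0 else ?f j"]
      by (simp add: sum.cong[of "Al w - {1}" "Al w - {1}"])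
    also have "\<dots> = (\<Sum>j\<in>Al w. ?f j) - ?f 1"
      using sum.remove[OF finite_Al A1, of ?f] by simp
    finally show ?thesis using True f1 by simp
  next
    case False
    then have lt: "w ! 0 < w ! 1" using w01 by simp
    have D0: "0 \<notin> Dset w" using lt unfolding Dset_def by auto
    have A0: "0 \<in> Al w" using D0 unfolding Al_char by auto
    have f0: "?f 0 = monom 1 (Suc (des w))"
      using des_ins_val[OF F(6) A0] wne by auto
    have "(\<Sum>j\<in>Al w. if ins (Suc n) j w ! 1 < ins (Suc n) j w ! 0 then ?f j else 0)
        = (\<Sum>j\<in>Al w. if 0 = j then ?f j else 0)"
    proof (rule sum.cong)
      fix j assume j: "j \<in> Al w"
      show "(if ins (Suc n) j w ! 1 < ins (Suc n) j w ! 0 then ?f j else 0) = (if 0 = j then ?f j else 0)"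
      proof (cases "j = 0")
        case True then show ?thesis using w0 by (simp add: ins_0)
      next
        case j0: False
        show ?thesis
        proof (cases "j = 1")
          case True then show ?thesis using wne w0 ins_1[OF wne, of "Suc n"] by simp
        next
          case False
          then have "2 \<le> j" using j0 by simp
          then show ?thesis using ins_ge2[OF _ l2] lt j0 by simp
        qed
      qed
    qed simp
    also have "\<dots> = ?f 0" using A0 finite_Al by simp
    finally show ?thesis using False f0 by simp
  qed
qed

lemma finite_RS: "finite (RS n)"
  unfolding RS_def by (rule finite_subset[of _ "permutations_of_set {1..n}"]) auto

lemma RS_decomp:
  assumes n: "n \<ge> 1"
  shows "RS (Suc n) = (\<lambda>(w,j). ins (Suc n) j w) ` Sigma (RS n) Al"
proof (rule set_eqI, rule iffI)
  fix p assume "p \<in> RS (Suc n)"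
  then have p: "p \<in> permutations_of_set {1..Suc n}" and s: "simsun (Suc n) p" unfolding RS_def by auto
  then obtain w j where w: "w \<in> permutations_of_set {1..n}" and j: "j \<in> {0..n}" and pe: "p = ins (Suc n) j w"
    unfolding ins_perm by auto
  have l: "length w = n" using w by (rule perm_len)
  from s have "simsun n w \<and> \<not> (j + 1 < length w \<and> w ! (j+1) < w ! j)" unfolding pe using simsun_ins[OF w n] by simp
  then have "w \<in> RS n" "j \<in> Al w" using w j l unfolding RS_def Al_def by auto
  then show "p \<in> (\<lambda>(w,j). ins (Suc n) j w) ` Sigma (RS n) Al" using pe by force
next
  fix p assume "p \<in> (\<lambda>(w,j). ins (Suc n) j w) ` Sigma (RS n) Al"
  then obtain w j where w: "w \<in> RS n" and j: "j \<in> Al w" and pe: "p = ins (Suc n) j w" by auto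
  have wp: "w \<in> permutations_of_set {1..n}" using w unfolding RS_def by auto
  have l: "length w = n" using wp by (rule perm_len)
  have jn: "j \<in> {0..n}" using j l unfolding Al_def by auto
  have "p \<in> permutations_of_set {1..Suc n}" unfolding ins_perm pe using wp jn by force
  moreover have "simsun (Suc n) p" unfolding pe using simsun_ins[OF wp n] w j unfolding RS_def Al_def by auto
  ultimately show "p \<in> RS (Suc n)" unfolding RS_def by auto
qed

lemma RS_sum:
  assumes n: "n \<ge> 1"
  shows "(\<Sum>p\<in>RS (Suc n). f p) = (\<Sum>w\<in>RS n. \<Sum>j\<in>Al w. f (ins (Suc n) j w))"
proof -
  have sub: "Sigma (RS n) Al \<subseteq> permutations_of_set {1..n} \<times> {0..n}"
    using perm_len unfolding RS_def Al_def by fastforce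
  have inj: "inj_on (\<lambda>(w,j). ins (Suc n) j w) (Sigma (RS n) Al)"
    by (rule inj_on_subset[OF ins_inj sub])
  have "(\<Sum>p\<in>RS (Suc n). f p) = (\<Sum>x\<in>Sigma (RS n) Al. f ((\<lambda>(w,j). ins (Suc n) j w) x))"
    unfolding RS_decomp[OF n] by (rule sum.reindex[OF inj, unfolded comp_def])
  also have "\<dots> = (\<Sum>w\<in>RS n. \<Sum>j\<in>Al w. f (ins (Suc n) j w))"
    using sum.Sigma[of "RS n" Al "\<lambda>w j. f (ins (Suc n) j w)"] finite_RS finite_Al by (simp add: split_def)
  finally show ?thesis .
qed

abbreviation pX :: "real poly" where "pX \<equiv> [:0, 1:]"

definition Lop :: "nat \<Rightarrow> real poly \<Rightarrow> real poly" where
  "Lop n p = pX * pderiv p + smult (of_nat n) (pX * p) - smult 2 (pX * (pX * pderiv p))"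

lemma Lop_sum: "Lop n (sum f A) = (\<Sum>x\<in>A. Lop n (f x))"
proof -
  have "sum (Lop n \<circ> f) A = Lop n (sum f A)"
    by (rule sum_comp_morphism) (simp_all add: Lop_def pderiv_add algebra_simps smult_add_right)
  then show ?thesis by (simp add: comp_def)
qed

lemma pX_monom: "pX * monom 1 k = monom 1 (Suc k)"
  by (simp add: monom_Suc)

lemma pX_mult_monom: "pX * monom c k = monom c (Suc k)"
  by (simp add: monom_Suc)

lemma pX_pderiv_monom: "pX * pderiv (monom 1 k) = smult (of_nat k) (monom 1 k)"
proof (cases k)
  case 0 then show ?thesis by (simp add: pderiv_monom)
next
  case (Suc k') then show ?thesis
    unfolding Suc pderiv_monom diff_Suc_1 pX_mult_monom by (simp add: smult_monom)
qed

lemma Lop_monom: "Lop n (monom 1 k) = smult (of_nat k) (monom 1 k) + smult (of_nat n - 2 * of_nat k) (monom 1 (Suc k))"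
  unfolding Lop_def pX_pderiv_monom pX_monom mult_smult_right
  by (simp add: smult_diff_left algebra_simps)

definition SA :: "nat \<Rightarrow> real poly" where "SA n = (\<Sum>xs\<in>RS_minus n. monom 1 (des xs))"
definition SB :: "nat \<Rightarrow> real poly" where "SB n = (\<Sum>xs\<in>RS_plus n. monom 1 (des xs))"

lemma T_sum': "w \<in> RS n \<Longrightarrow> n \<ge> 1 \<Longrightarrow> (\<Sum>j\<in>Al w. monom (1::real) (des (ins (Suc n) j w))) = monom 1 (des w) + Lop n (monom 1 (des w))"
  unfolding T_sum Lop_monom by (simp add: smult_add_left algebra_simps)

lemma S_rec: "n \<ge> 1 \<Longrightarrow> S_poly (Suc n) = S_poly n + Lop n (S_poly n)"
  unfolding S_poly_def by (simp add: RS_sum T_sum' sum.distrib Lop_sum)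

lemma RS_split0: "n \<ge> 2 \<Longrightarrow> RS n \<inter> {x. x ! 1 < x ! 0} = RS_plus n \<and> RS n \<inter> - {x. x ! 1 < x ! 0} = RS_minus n"
proof -
  assume n: "n \<ge> 2"
  have "x ! 0 \<noteq> x ! 1" if "x \<in> RS n" for x
  proof -
    note F = RS_facts[OF that] 
    have "length x = n" "distinct x" using F n by auto
    then show ?thesis using n by (simp add: nth_eq_iff_index_eq)
  qed
  then show ?thesis unfolding RS_plus_def RS_minus_def by (auto simp: linorder_neq_iff)
qed

lemma RS_split1: "n \<ge> 2 \<Longrightarrow> RS n \<inter> {x. x ! 1 < x ! 0} = RS_plus n" using RS_split0 by blast
lemma RS_split2: "n \<ge> 2 \<Longrightarrow> RS n \<inter> - {x. x ! 1 < x ! 0} = RS_minus n" using RS_split0 by blast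

lemma S_split: "n \<ge> 2 \<Longrightarrow> S_poly n = SB n + SA n"
proof -
  assume n: "n \<ge> 2"
  have "S_poly n = (\<Sum>xs\<in>RS n. if xs ! 1 < xs ! 0 then monom 1 (des xs) else monom 1 (des xs))"
    unfolding S_poly_def by simp
  also have "\<dots> = SB n + SA n"
    unfolding sum.If_cases[OF finite_RS] RS_split1[OF n] RS_split2[OF n] SA_def SB_def ..
  finally show ?thesis .
qed

lemma B_rec: "n \<ge> 2 \<Longrightarrow> SB (Suc n) = pX * SA n + Lop n (SB n)"
proof -
  assume n: "n \<ge> 2"
  then have n1: "n \<ge> 1" by simp
  have "SB (Suc n) = (\<Sum>p\<in>RS (Suc n). if p ! 1 < p ! 0 then monom 1 (des p) else 0)"
    unfolding SB_def RS_plus_def by (rule sum.inter_filter[OF finite_RS])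
  also have "\<dots> = (\<Sum>w\<in>RS n. if w ! 1 < w ! 0 then Lop n (monom 1 (des w)) else pX * monom 1 (des w))"
    unfolding RS_sum[OF n1]
  proof (rule sum.cong)
    fix w assume w: "w \<in> RS n"
    show "(\<Sum>j\<in>Al w. if ins (Suc n) j w ! 1 < ins (Suc n) j w ! 0 then monom 1 (des (ins (Suc n) j w)) else 0) =
         (if w ! 1 < w ! 0 then Lop n (monom 1 (des w)) else pX * monom 1 (des w))"
      using G_sum[OF w n] T_sum'[OF w n1] by (simp add: pX_monom monom_Suc)
  qed simp
  also have "\<dots> = (\<Sum>w\<in>RS_plus n. Lop n (monom 1 (des w))) + (\<Sum>w\<in>RS_minus n. pX * monom 1 (des w))"
    unfolding sum.If_cases[OF finite_RS] RS_split1[OF n] RS_split2[OF n] ..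
  also have "\<dots> = pX * SA n + Lop n (SB n)"
    unfolding SA_def SB_def Lop_sum sum_distrib_left by simp
  finally show ?thesis .
qed



lemma peq: "(\<And>x. poly p x = poly q x) \<Longrightarrow> (p :: real poly) = q"
  using poly_eq_poly_eq_iff by blast

lemma simsun_small: "n \<le> 2 \<Longrightarrow> length xs \<le> 2 \<Longrightarrow> simsun n xs"
  unfolding simsun_def using hdd_short
  by (metis le_less_trans length_filter_le less_numeral_extra(4) not_less numeral_2_eq_2 numeral_3_eq_3 lessI)

lemma RS2: "RS 2 = {[1,2],[2,1]}"
proof -
  have e: "{1..2::nat} = {1,2}" by auto
  have "permutations_of_set {1..2::nat} = {[1,2],[2,1]}" unfolding e
    by (rule permutations_of_set_doubleton) simp
  moreover have "simsun 2 [1,2]" "simsun 2 [2,1]" by (simp_all add: simsun_small)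
  ultimately show ?thesis unfolding RS_def by auto
qed

lemma RS_plus2: "RS_plus 2 = {[2,1]}" unfolding RS_plus_def RS2 by auto
lemma RS_minus2: "RS_minus 2 = {[1,2]}" unfolding RS_minus_def RS2 by auto

lemma SA2: "SA 2 = 1" unfolding SA_def RS_minus2 by (simp add: des_desc)
lemma SB2: "SB 2 = pX" unfolding SB_def RS_plus2 by (simp add: des_desc monom_Suc)

lemma inv_rec:
  assumes "n \<ge> 2"
  shows "pderiv (SB n) = smult (of_nat n - 1) (SA n) - smult 2 (pX * pderiv (SA n))"
  using assms
proof (induction n rule: dec_induct)
  case base
  show ?case by (simp add: SA2 SB2 pderiv_pCons)
next
  case (step n)
  have n: "n \<ge> 2" by fact
  let ?S = "S_poly n"
  have Sdef: "?S = SB n + SA n" by (rule S_split[OF n])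
  have B1: "SB (Suc n) = pX * (smult (of_nat n) ?S - smult 2 (pX * pderiv ?S))"
  proof (rule peq)
    fix x
    show "poly (SB (Suc n)) x = poly (pX * (smult (of_nat n) ?S - smult 2 (pX * pderiv ?S))) x"
      unfolding B_rec[OF n] Lop_def Sdef step.IH pderiv_add
      by (simp add: algebra_simps)
  qed
  have S1: "S_poly (Suc n) = ?S + pX * pderiv ?S + smult (of_nat n) (pX * ?S) - smult 2 (pX * (pX * pderiv ?S))"
    using S_rec[of n] n by (simp add: Lop_def algebra_simps)
  have A1: "SA (Suc n) = ?S + pX * pderiv ?S"
  proof (rule peq)
    fix x
    have "S_poly (Suc n) = SB (Suc n) + SA (Suc n)" by (rule S_split) (use n in simp)
    then have "poly (SA (Suc n)) x = poly (S_poly (Suc n)) x - poly (SB (Suc n)) x" by simp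
    then show "poly (SA (Suc n)) x = poly (?S + pX * pderiv ?S) x"
      unfolding S1 B1 by (simp add: algebra_simps)
  qed
  show ?case
  proof (rule peq)
    fix x
    show "poly (pderiv (SB (Suc n))) x = poly (smult (of_nat (Suc n) - 1) (SA (Suc n)) - smult 2 (pX * pderiv (SA (Suc n)))) x"
      unfolding B1 A1 by (simp add: pderiv_mult pderiv_add pderiv_diff pderiv_smult pderiv_pCons algebra_simps)
  qed
qed

lemma AB_formulas:
  assumes n: "n \<ge> 2"
  shows "SA (Suc n) = S_poly n + pX * pderiv (S_poly n)"
    and "SB (Suc n) = pX * (smult (of_nat n) (S_poly n) - smult 2 (pX * pderiv (S_poly n)))"
proof -
  let ?S = "S_poly n"
  have Sdef: "?S = SB n + SA n" by (rule S_split[OF n])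
  show B1: "SB (Suc n) = pX * (smult (of_nat n) ?S - smult 2 (pX * pderiv ?S))"
  proof (rule peq)
    fix x
    show "poly (SB (Suc n)) x = poly (pX * (smult (of_nat n) ?S - smult 2 (pX * pderiv ?S))) x"
      unfolding B_rec[OF n] Lop_def Sdef inv_rec[OF n] pderiv_add
      by (simp add: algebra_simps)
  qed
  have S1: "S_poly (Suc n) = ?S + pX * pderiv ?S + smult (of_nat n) (pX * ?S) - smult 2 (pX * (pX * pderiv ?S))"
    using S_rec[of n] n by (simp add: Lop_def algebra_simps)
  show "SA (Suc n) = ?S + pX * pderiv ?S"
  proof (rule peq)
    fix x
    have "S_poly (Suc n) = SB (Suc n) + SA (Suc n)" by (rule S_split) (use n in simp)
    then have "poly (SA (Suc n)) x = poly (S_poly (Suc n)) x - poly (SB (Suc n)) x" by simp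
    then show "poly (SA (Suc n)) x = poly (?S + pX * pderiv ?S) x"
      unfolding S1 B1 by (simp add: algebra_simps)
  qed
qed

lemma pk_des:
  assumes xs: "xs \<in> RS m" and m: "m \<ge> 2"
  shows "des xs = pk xs + (if xs ! 1 < xs ! 0 then 1 else 0)"
proof -
  have m1: "m \<ge> 1" using m by simp
  note F = RS_facts[OF xs m1]
  let ?PK = "{j. 0 < j \<and> j + 1 < length xs \<and> xs ! (j - 1) < xs ! j \<and> xs ! j > xs ! (j + 1)}"
  have PK: "?PK = Dset xs - {0}"
  proof (rule set_eqI, rule iffI)
    fix j assume "j \<in> ?PK" then show "j \<in> Dset xs - {0}" unfolding Dset_def by auto
  next
    fix j assume j: "j \<in> Dset xs - {0}"
    then have j1: "0 < j" "j + 1 < length xs" "xs ! j > xs ! (j + 1)" unfolding Dset_def by auto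
    have "\<not> xs ! (j - 1) > xs ! j"
    proof
      assume "xs ! (j - 1) > xs ! j"
      then have "has_double_descent xs" unfolding has_double_descent_def using j1
        by (intro exI[of _ "j - 1"]) auto
      then show False using F(4) by (simp add: hdd_ddf)
    qed
    moreover have "xs ! (j - 1) \<noteq> xs ! j" using F(2) j1 by (simp add: nth_eq_iff_index_eq)
    ultimately show "j \<in> ?PK" using j1 by auto
  qed
  have pkc: "pk xs = card (Dset xs - {0})" unfolding pk_def PK ..
  have d0: "0 \<in> Dset xs \<longleftrightarrow> xs ! 1 < xs ! 0" using F(1) m unfolding Dset_def by auto
  show ?thesis
  proof (cases "0 \<in> Dset xs")
    case True
    then have "card (Dset xs) = Suc (card (Dset xs - {0}))"
      using finite_Dset by (metis card_Suc_Diff1)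
    then show ?thesis using True d0 pkc by (simp add: des_card)
  next
    case False
    then show ?thesis using d0 pkc by (simp add: des_card)
  qed
qed

lemma SA_P: "m \<ge> 2 \<Longrightarrow> SA m = P_minus m"
  unfolding SA_def P_minus_def
  by (rule sum.cong) (auto simp: RS_minus_def pk_des)

lemma SB_P: "m \<ge> 2 \<Longrightarrow> SB m = pX * P_plus m"
  unfolding SB_def P_plus_def sum_distrib_left
  by (rule sum.cong) (auto simp: RS_plus_def pk_des monom_Suc)

lemma P_split: "m \<ge> 2 \<Longrightarrow> P_poly m = P_plus m + P_minus m"
proof -
  assume m: "m \<ge> 2"
  have "P_poly m = (\<Sum>xs\<in>RS m. if xs ! 1 < xs ! 0 then monom 1 (pk xs) else monom 1 (pk xs))"
    unfolding P_poly_def by simp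
  also have "\<dots> = P_plus m + P_minus m"
    unfolding sum.If_cases[OF finite_RS] RS_split1[OF m] RS_split2[OF m] P_plus_def P_minus_def ..
  finally show ?thesis .
qed

lemma pX_cancel: "pX * p = pX * q \<Longrightarrow> p = q"
  by simp

lemma final_formulas:
  assumes n: "n \<ge> 2"
  shows "P_minus (Suc n) = S_poly n + pX * pderiv (S_poly n)"
    "P_plus (Suc n) = smult (of_nat n) (S_poly n) - smult 2 (pX * pderiv (S_poly n))"
    "P_poly (Suc n) = smult (of_nat n + 1) (S_poly n) - pX * pderiv (S_poly n)"
proof -
  have n2: "Suc n \<ge> 2" using n by simp
  show m: "P_minus (Suc n) = S_poly n + pX * pderiv (S_poly n)"
    using SA_P[OF n2] AB_formulas(1)[OF n] by (rule subst)
  show p: "P_plus (Suc n) = smult (of_nat n) (S_poly n) - smult 2 (pX * pderiv (S_poly n))"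
  proof (rule pX_cancel)
    have "pX * P_plus (Suc n) = SB (Suc n)" by (rule SB_P[OF n2, symmetric])
    also have "\<dots> = pX * (smult (of_nat n) (S_poly n) - smult 2 (pX * pderiv (S_poly n)))"
      by (rule AB_formulas(2)[OF n])
    finally show "pX * P_plus (Suc n) = pX * (smult (of_nat n) (S_poly n) - smult 2 (pX * pderiv (S_poly n)))" .
  qed
  show "P_poly (Suc n) = smult (of_nat n + 1) (S_poly n) - pX * pderiv (S_poly n)"
    unfolding P_split[OF n2] m p by (rule peq) (simp add: algebra_simps)
qed

lemma P2: "P_poly 2 = 2" "P_plus 2 = 1" "P_minus 2 = 1"
proof -
  have m2: "(2::nat) \<ge> 2" by simp
  show m: "P_minus 2 = 1" using SA_P[OF m2] SA2 by (rule subst)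
  show p: "P_plus 2 = 1"
  proof (rule pX_cancel)
    have "pX * P_plus 2 = SB 2" by (rule SB_P[OF m2, symmetric])
    also have "\<dots> = pX * 1" by (simp add: SB2)
    finally show "pX * P_plus 2 = pX * 1" .
  qed
  show "P_poly 2 = 2" unfolding P_split[OF m2] m p by simp
qed

lemma S2: "S_poly 2 = 1 + pX" using S_split[of 2] SA2 SB2 by simp



abbreviation prodl :: "real list \<Rightarrow> real poly" where
  "prodl zs \<equiv> (\<Prod>x\<leftarrow>zs. [:- x, 1:])"

lemma poly_prodl: "poly (prodl zs) x = (\<Prod>z\<leftarrow>zs. x - z)"
  by (induction zs) (auto simp: algebra_simps)

lemma prodl_pos: "(\<forall>a\<in>set as. a < x) \<Longrightarrow> poly (prodl as) x > 0"
  by (induction as) auto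

lemma prodl_sign: "(\<forall>b\<in>set bs. x < b) \<Longrightarrow> (-1) ^ length bs * poly (prodl bs) x > 0"
proof (induction bs)
  case Nil then show ?case by simp
next
  case (Cons b bs)
  then have h: "(-1) ^ length bs * poly (prodl bs) x > 0" and xb: "x < b" by auto
  have "(-1) ^ length (b # bs) * poly (prodl (b # bs)) x = ((-1) ^ length bs * poly (prodl bs) x) * (b - x)"
    by (simp add: algebra_simps)
  also have "\<dots> > 0" using h xb by simp
  finally show ?case .
qed

lemma sign_prod_neg:
  fixes s t a b :: real
  assumes "s * t = -1" "0 < s * a" "0 < t * b"
  shows "a * b < 0"
proof -
  have "0 < (s * a) * (t * b)" using assms(2,3) by (rule mult_pos_pos)
  also have "(s * a) * (t * b) = (s * t) * (a * b)" by (simp add: algebra_simps)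
  finally show ?thesis using assms(1) by simp
qed

definition good :: "real poly \<Rightarrow> real list \<Rightarrow> bool" where
  "good T rs \<longleftrightarrow> lead_coeff T > 0 \<and> sorted_wrt (<) rs \<and> (\<forall>r\<in>set rs. r < 0) \<and>
     T = smult (lead_coeff T) (prodl rs) \<and> degree T = length rs"

lemma deriv_sign:
  assumes g: "good T rs" and i: "i < length rs"
  shows "(-1) ^ (length rs - 1 - i) * poly (pderiv T) (rs ! i) > 0"
proof -
  let ?c = "lead_coeff T" and ?r = "rs ! i"
  let ?as = "take i rs" and ?bs = "drop (Suc i) rs"
  have dec: "rs = ?as @ ?r # ?bs" using i by (rule id_take_nth_drop)
  have sw: "sorted_wrt (<) rs" using g unfolding good_def by simp
  then have sw2: "sorted_wrt (<) (?as @ ?r # ?bs)" using dec by simp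
  then have as_lt: "\<forall>a\<in>set ?as. a < ?r" and bs_gt: "\<forall>b\<in>set ?bs. ?r < b"
    by (auto simp: sorted_wrt_append)
  have T: "T = smult ?c ([:- ?r, 1:] * (prodl ?as * prodl ?bs))"
  proof -
    have "T = smult ?c (prodl rs)" using g unfolding good_def by blast
    also have "prodl rs = prodl ?as * ([:- ?r, 1:] * prodl ?bs)" by (subst dec) simp
    finally show ?thesis by (simp add: algebra_simps)
  qed
  define R where "R = prodl ?as * prodl ?bs"
  have dT: "pderiv T = smult ?c ([:- ?r, 1:] * pderiv R + R * pderiv [:- ?r, 1:])"
    by (subst T) (simp only: pderiv_smult pderiv_mult R_def)
  have d1: "pderiv [:- ?r, 1:] = 1" by (simp add: pderiv_pCons)
  have "poly (pderiv T) ?r = ?c * poly R ?r" unfolding dT d1 by simp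
  then have "poly (pderiv T) ?r = ?c * (poly (prodl ?as) ?r * poly (prodl ?bs) ?r)" unfolding R_def by simp
  moreover have "?c > 0" using g unfolding good_def by blast
  moreover have "poly (prodl ?as) ?r > 0" using as_lt by (rule prodl_pos)
  moreover have "(-1) ^ length ?bs * poly (prodl ?bs) ?r > 0" using bs_gt by (rule prodl_sign)
  moreover have "length ?bs = length rs - 1 - i" by simp
  ultimately show ?thesis
    by (metis (no_types, lifting) mult.left_commute mult_pos_pos)
qed

lemma factor_roots:
  fixes q :: "real poly"
  assumes "q \<noteq> 0" "degree q \<le> length zs" "sorted_wrt (<) zs" "\<forall>z\<in>set zs. poly q z = 0"
  shows "degree q = length zs \<and> q = smult (lead_coeff q) (prodl zs)"
  using assms
proof (induction zs arbitrary: q)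
  case Nil
  then have "degree q = 0" by simp
  then show ?case using degree_0_id[of q] by simp
next
  case (Cons z zs)
  have "poly q z = 0" using Cons.prems by simp
  then have "[:- z, 1:] dvd q" by (simp add: poly_eq_0_iff_dvd)
  then obtain q' where q: "q = [:- z, 1:] * q'" by (elim dvdE)
  have q0: "q' \<noteq> 0" using Cons.prems(1) q by auto
  have dq: "degree q = Suc (degree q')" unfolding q using q0 by (subst degree_mult_eq) auto
  have zlt: "\<forall>y\<in>set zs. z < y" and swz: "sorted_wrt (<) zs" using Cons.prems(3) by auto
  have roots: "\<forall>y\<in>set zs. poly q' y = 0"
  proof
    fix y assume y: "y \<in> set zs"
    then have "poly q y = 0" using Cons.prems(4) by simp
    then have "poly q' y = 0 \<or> y = z" unfolding q by simp
    then show "poly q' y = 0" using zlt y by auto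
  qed
  have "degree q' \<le> length zs" using Cons.prems(2) dq by simp
  from Cons.IH[OF q0 this swz roots]
  have ih: "degree q' = length zs" "q' = smult (lead_coeff q') (prodl zs)" by auto
  have lc: "lead_coeff q = lead_coeff q'" unfolding q lead_coeff_mult by simp
  show ?case
  proof
    show "degree q = length (z # zs)" using dq ih by simp
    have e: "q = smult (lead_coeff q') ([:- z, 1:] * prodl zs)" using q ih(2) by (metis mult_smult_right)
    have "prodl (z # zs) = [:- z, 1:] * prodl zs" by simp
    then show "q = smult (lead_coeff q) (prodl (z # zs))" using e lc by metis
  qed
qed

lemma interleave:
  fixes q :: "real poly"
  assumes sw: "sorted_wrt (<) ps" and ch: "\<forall>i. Suc i < length ps \<longrightarrow> poly q (ps ! i) * poly q (ps ! Suc i) < 0"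
  shows "\<exists>zs. length zs = length ps - 1 \<and> sorted_wrt (<) zs \<and>
     (\<forall>i<length zs. ps ! i < zs ! i \<and> zs ! i < ps ! Suc i \<and> poly q (zs ! i) = 0)"
proof -
  let ?k = "length ps - 1"
  have "\<forall>i\<in>{..<?k}. \<exists>z. ps ! i < z \<and> z < ps ! Suc i \<and> poly q z = 0"
  proof
    fix i assume "i \<in> {..<?k}"
    then have i: "Suc i < length ps" by auto
    then have "ps ! i < ps ! Suc i" using sw by (simp add: sorted_wrt_nth_less)
    from poly_IVT[OF this] ch i show "\<exists>z. ps ! i < z \<and> z < ps ! Suc i \<and> poly q z = 0" by auto
  qed
  then obtain f where f: "\<forall>i\<in>{..<?k}. ps ! i < f i \<and> f i < ps ! Suc i \<and> poly q (f i) = 0"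
    by (metis bchoice)
  let ?zs = "map f [0..<?k]"
  have P: "\<forall>i<length ?zs. ps ! i < ?zs ! i \<and> ?zs ! i < ps ! Suc i \<and> poly q (?zs ! i) = 0"
    using f by auto
  have "sorted_wrt (<) ?zs"
    unfolding sorted_wrt_iff_nth_less
  proof (intro allI impI)
    fix i j assume ij: "i < j" "j < length ?zs"
    have "?zs ! i < ps ! Suc i" using P ij by auto
    also have "ps ! Suc i \<le> ps ! j"
    proof (cases "Suc i = j")
      case True then show ?thesis by simp
    next
      case False
      then have "Suc i < j" using ij by simp
      moreover have "j < length ps" using ij by simp
      ultimately show ?thesis using sw by (simp add: sorted_wrt_nth_less less_imp_le)
    qed
    also have "ps ! j < ?zs ! j" using P ij by auto
    finally show "?zs ! i < ?zs ! j" .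
  qed
  then show ?thesis using P by (intro exI[of _ ?zs]) simp
qed

lemma minf_sign:
  fixes q :: "real poly"
  assumes "lead_coeff q > 0"
  shows "\<exists>M. \<forall>x\<le>M. (-1) ^ degree q * poly q x > 0"
proof -
  let ?q2 = "smult ((-1) ^ degree q) (pcompose q [:0, -1:])"
  have "lead_coeff (pcompose q [:0, -1:]) = lead_coeff q * (-1) ^ degree q"
    by (subst lead_coeff_comp) auto
  then have lc: "lead_coeff ?q2 = lead_coeff q"
    by (simp add: mult.assoc[symmetric] power_mult_distrib[symmetric])
  obtain N where N: "\<forall>x\<ge>N. poly ?q2 x \<ge> lead_coeff ?q2"
    using poly_pinfty_gt_lc[of ?q2] lc assms by auto
  have "\<forall>x\<le>-N. (-1) ^ degree q * poly q x > 0"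
  proof (intro allI impI)
    fix x assume "x \<le> -N"
    then have "poly ?q2 (-x) \<ge> lead_coeff q" using N lc by auto
    then show "(-1) ^ degree q * poly q x > 0" using assms by (simp add: poly_pcompose)
  qed
  then show ?thesis by blast
qed

lemma gen_roots:
  fixes q :: "real poly"
  assumes sw: "sorted_wrt (<) ps" and len: "degree q + 1 \<le> length ps" and q0: "q \<noteq> 0"
    and ch: "\<forall>i. Suc i < length ps \<longrightarrow> poly q (ps ! i) * poly q (ps ! Suc i) < 0"
    and np: "\<forall>p\<in>set ps. p \<le> 0"
  shows "\<exists>zs. length zs = length ps - 1 \<and> degree q = length zs \<and> sorted_wrt (<) zs \<and> (\<forall>z\<in>set zs. z < 0) \<and>
     q = smult (lead_coeff q) (prodl zs) \<and> (\<forall>i<length zs. ps ! i < zs ! i \<and> zs ! i < ps ! Suc i)"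
proof -
  obtain zs where zs: "length zs = length ps - 1" "sorted_wrt (<) zs"
    "\<forall>i<length zs. ps ! i < zs ! i \<and> zs ! i < ps ! Suc i \<and> poly q (zs ! i) = 0"
    using interleave[OF sw ch] by blast
  have roots: "\<forall>z\<in>set zs. poly q z = 0" using zs(3) by (auto simp: in_set_conv_nth)
  have "degree q \<le> length zs" using len zs(1) by simp
  note fr = factor_roots[OF q0 this zs(2) roots]
  have neg: "\<forall>z\<in>set zs. z < 0"
  proof
    fix z assume "z \<in> set zs"
    then obtain i where i: "i < length zs" "z = zs ! i" by (auto simp: in_set_conv_nth)
    then have "z < ps ! Suc i" using zs(3) by auto
    moreover have "ps ! Suc i \<le> 0" using np i zs(1) by (simp add: nth_mem)
    ultimately show "z < 0" by simp
  qed
  show ?thesis using zs fr neg by blast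
qed

lemma lc_pos_from0:
  fixes q :: "real poly"
  assumes "q = smult (lead_coeff q) (prodl zs)" "\<forall>z\<in>set zs. z < 0" "poly q 0 > 0"
  shows "lead_coeff q > 0"
proof -
  have "poly (prodl zs) 0 > 0" using assms(2) by (intro prodl_pos) auto
  moreover have "poly q 0 = lead_coeff q * poly (prodl zs) 0" using assms(1) by (metis poly_smult)
  ultimately show ?thesis using assms(3) by (metis zero_less_mult_pos2)
qed

definition Gq :: "real \<Rightarrow> real \<Rightarrow> real \<Rightarrow> real \<Rightarrow> real poly \<Rightarrow> real poly" where
  "Gq a b e f T = smult a T + smult b (pX * pderiv T) + smult e (pX * T) + smult f (pX * (pX * pderiv T))"

lemma coeff_Gq_Suc:
  "coeff (Gq a b e f T) (Suc k) = (a + b * of_nat (Suc k)) * coeff T (Suc k) + (e + f * of_nat k) * coeff T k"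
  unfolding Gq_def by (cases k) (simp_all add: coeff_pderiv algebra_simps)

lemma poly_Gq_0: "poly (Gq a b e f T) 0 = a * poly T 0"
  unfolding Gq_def by simp

lemma poly_Gq_root: "poly T r = 0 \<Longrightarrow> poly (Gq a b e f T) r = (b * r + f * r^2) * poly (pderiv T) r"
  unfolding Gq_def by (simp add: algebra_simps power2_eq_square)

lemma degree_Gq:
  assumes "degree T = d" "e + f * of_nat d = 0"
  shows "degree (Gq a b e f T) \<le> d"
proof (rule degree_le, intro allI impI)
  fix i assume i: "d < i"
  then obtain k where k: "i = Suc k" "d \<le> k" by (cases i) auto
  have "coeff T (Suc k) = 0" using k assms(1) by (simp add: coeff_eq_0)
  moreover have "(e + f * of_nat k) * coeff T k = 0"
  proof (cases "k = d")
    case True then show ?thesis using assms(2) by simp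
  next
    case False then have "degree T < k" using k assms(1) by simp
    then show ?thesis by (simp add: coeff_eq_0)
  qed
  ultimately show "coeff (Gq a b e f T) i = 0" unfolding k coeff_Gq_Suc by simp
qed

lemma degree_Gq1:
  assumes "degree T = d"
  shows "degree (Gq a b e f T) \<le> Suc d"
proof (rule degree_le, intro allI impI)
  fix i assume i: "Suc d < i"
  then obtain k where k: "i = Suc k" "d < k" by (cases i) auto
  then show "coeff (Gq a b e f T) i = 0" unfolding k coeff_Gq_Suc using assms by (simp add: coeff_eq_0)
qed

lemma alt_signs:
  assumes g: "good T rs" and Q: "\<forall>r\<in>set rs. poly Q r = gg r * poly (pderiv T) r"
    and eps: "\<forall>r\<in>set rs. 0 < \<epsilon> * gg r" and ee: "\<epsilon> * \<epsilon> = 1"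
  shows "\<forall>i<length rs. 0 < (\<epsilon> * (-1) ^ (length rs - 1 - i)) * poly Q (rs ! i)"
    and "\<forall>i. Suc i < length rs \<longrightarrow> poly Q (rs ! i) * poly Q (rs ! Suc i) < 0"
proof -
  show A: "\<forall>i<length rs. 0 < (\<epsilon> * (-1) ^ (length rs - 1 - i)) * poly Q (rs ! i)"
  proof (intro allI impI)
    fix i assume i: "i < length rs"
    have "0 < (\<epsilon> * gg (rs ! i)) * ((-1) ^ (length rs - 1 - i) * poly (pderiv T) (rs ! i))"
      using eps deriv_sign[OF g i] i by (simp add: nth_mem)
    also have "\<dots> = (\<epsilon> * (-1) ^ (length rs - 1 - i)) * poly Q (rs ! i)"
      using Q i by (simp add: nth_mem algebra_simps)
    finally show "0 < (\<epsilon> * (-1) ^ (length rs - 1 - i)) * poly Q (rs ! i)" .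
  qed
  show "\<forall>i. Suc i < length rs \<longrightarrow> poly Q (rs ! i) * poly Q (rs ! Suc i) < 0"
  proof (intro allI impI)
    fix i assume i: "Suc i < length rs"
    define k where "k = length rs - 1 - Suc i"
    have k1: "length rs - 1 - i = Suc k" using i unfolding k_def by simp
    have p1: "((-1::real) ^ k) * (-1) ^ k = 1" by (induction k) auto
    have "(\<epsilon> * (-1) ^ Suc k) * (\<epsilon> * (-1) ^ k) = - ((\<epsilon> * \<epsilon>) * ((-1) ^ k * (-1) ^ k))"
      by (simp add: algebra_simps)
    then have "(\<epsilon> * (-1) ^ Suc k) * (\<epsilon> * (-1) ^ k) = -1" using p1 ee by simp
    moreover have "0 < (\<epsilon> * (-1) ^ Suc k) * poly Q (rs ! i)" using A i k1 by (metis Suc_lessD)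
    moreover have "0 < (\<epsilon> * (-1) ^ k) * poly Q (rs ! Suc i)" using A i unfolding k_def by auto
    ultimately show "poly Q (rs ! i) * poly Q (rs ! Suc i) < 0" by (rule sign_prod_neg)
  qed
qed



lemma good_neg: "good T rs \<Longrightarrow> r \<in> set rs \<Longrightarrow> r < 0" unfolding good_def by blast
lemma good_sorted: "good T rs \<Longrightarrow> sorted_wrt (<) rs" unfolding good_def by blast
lemma good_deg: "good T rs \<Longrightarrow> degree T = length rs" unfolding good_def by blast
lemma good_lc: "good T rs \<Longrightarrow> lead_coeff T > 0" unfolding good_def by blast
lemma good_eq: "good T rs \<Longrightarrow> T = smult (lead_coeff T) (prodl rs)" unfolding good_def by blast

lemma good_poly0: "good T rs \<Longrightarrow> poly T 0 > 0"
proof -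
  assume g: "good T rs"
  have "poly (prodl rs) 0 > 0" using good_neg[OF g] by (intro prodl_pos) auto
  moreover have "poly T 0 = lead_coeff T * poly (prodl rs) 0" using good_eq[OF g] by (metis poly_smult)
  ultimately show ?thesis using good_lc[OF g] by simp
qed

lemma cfg_right:
  assumes g: "good T rs" and ne: "rs \<noteq> []"
    and Q: "\<forall>r\<in>set rs. poly Q r = gg r * poly (pderiv T) r"
    and gneg: "\<forall>r\<in>set rs. gg r < 0" and q0: "poly Q 0 > 0" and dq: "degree Q \<le> length rs"
  shows "\<exists>zs. good Q zs \<and> length zs = length rs \<and>
     (\<forall>i<length rs. rs ! i < zs ! i \<and> (Suc i < length rs \<longrightarrow> zs ! i < rs ! Suc i))"
proof -
  have eps: "\<forall>r\<in>set rs. 0 < (-1) * gg r" using gneg by auto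
  have ee: "(-1) * (-1) = (1::real)" by simp
  note A = alt_signs[OF g Q eps ee]
  let ?ps = "rs @ [0]"
  let ?d = "length rs"
  have sw: "sorted_wrt (<) ?ps" using good_sorted[OF g] good_neg[OF g] by (auto simp: sorted_wrt_append)
  have len: "degree Q + 1 \<le> length ?ps" using dq by simp
  have Q0: "Q \<noteq> 0" using q0 by auto
  have ch: "\<forall>i. Suc i < length ?ps \<longrightarrow> poly Q (?ps ! i) * poly Q (?ps ! Suc i) < 0"
  proof (intro allI impI)
    fix i assume i: "Suc i < length ?ps"
    show "poly Q (?ps ! i) * poly Q (?ps ! Suc i) < 0"
    proof (cases "Suc i < ?d")
      case True
      then show ?thesis using A(2) by (simp add: nth_append)
    next
      case False
      then have ii: "i = ?d - 1" "i < ?d" using i by auto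
      have "0 < ((-1) * (-1) ^ (?d - 1 - i)) * poly Q (rs ! i)" using A(1) ii(2) by simp
      then have "poly Q (rs ! i) < 0" using ii by simp
      moreover have "?ps ! Suc i = 0" using ii ne by (simp add: nth_append)
      ultimately show ?thesis using ii q0 by (simp add: nth_append mult_neg_pos)
    qed
  qed
  have np: "\<forall>p\<in>set ?ps. p \<le> 0" using good_neg[OF g] by force
  obtain zs where zs: "length zs = length ?ps - 1" "degree Q = length zs" "sorted_wrt (<) zs"
    "\<forall>z\<in>set zs. z < 0" "Q = smult (lead_coeff Q) (prodl zs)"
    "\<forall>i<length zs. ?ps ! i < zs ! i \<and> zs ! i < ?ps ! Suc i"
    using gen_roots[OF sw len Q0 ch np] by blast
  have lc: "lead_coeff Q > 0" using lc_pos_from0[OF zs(5) zs(4) q0] .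
  have "good Q zs" unfolding good_def using zs lc by simp
  moreover have "\<forall>i<length rs. rs ! i < zs ! i \<and> (Suc i < length rs \<longrightarrow> zs ! i < rs ! Suc i)"
  proof (intro allI impI)
    fix i assume i: "i < length rs"
    then have "?ps ! i < zs ! i \<and> zs ! i < ?ps ! Suc i" using zs(1,6) by simp
    then show "rs ! i < zs ! i \<and> (Suc i < length rs \<longrightarrow> zs ! i < rs ! Suc i)" using i by (auto simp: nth_append)
  qed
  ultimately show ?thesis using zs(1) by auto
qed

lemma cfg_left:
  assumes g: "good T rs" and ne: "rs \<noteq> []"
    and Q: "\<forall>r\<in>set rs. poly Q r = gg r * poly (pderiv T) r"
    and gpos: "\<forall>r\<in>set rs. gg r > 0" and lcq: "lead_coeff Q > 0" and dq: "degree Q = length rs"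
  shows "\<exists>zs. good Q zs \<and> length zs = length rs \<and>
     (\<forall>i<length rs. zs ! i < rs ! i \<and> (0 < i \<longrightarrow> rs ! (i - 1) < zs ! i))"
proof -
  have eps: "\<forall>r\<in>set rs. 0 < 1 * gg r" using gpos by auto
  have ee: "1 * 1 = (1::real)" by simp
  note A = alt_signs[OF g Q eps ee]
  let ?d = "length rs"
  obtain M0 where M0: "\<forall>x\<le>M0. (-1) ^ degree Q * poly Q x > 0" using minf_sign[OF lcq] by blast
  define M where "M = min M0 (rs ! 0 - 1)"
  have MM: "(-1) ^ ?d * poly Q M > 0" using M0 dq unfolding M_def by auto
  have Mlt: "M < rs ! 0" unfolding M_def by simp
  let ?ps = "M # rs"
  have sw: "sorted_wrt (<) ?ps"
  proof -
    have "\<forall>y\<in>set rs. M < y"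
    proof
      fix y assume y: "y \<in> set rs"
      then obtain j where j: "j < ?d" "y = rs ! j" by (auto simp: in_set_conv_nth)
      have "rs ! 0 \<le> rs ! j" using good_sorted[OF g] j
        by (cases j) (auto simp: sorted_wrt_nth_less less_imp_le)
      then show "M < y" using Mlt j by simp
    qed
    then show ?thesis using good_sorted[OF g] by simp
  qed
  have len: "degree Q + 1 \<le> length ?ps" using dq by simp
  have Q0: "Q \<noteq> 0" using lcq by auto
  have d1: "?d \<ge> 1" using ne by (cases rs) auto
  have ch: "\<forall>i. Suc i < length ?ps \<longrightarrow> poly Q (?ps ! i) * poly Q (?ps ! Suc i) < 0"
  proof (intro allI impI)
    fix i assume i: "Suc i < length ?ps"
    show "poly Q (?ps ! i) * poly Q (?ps ! Suc i) < 0"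
    proof (cases i)
      case 0
      have s: "0 < (1 * (-1) ^ (?d - 1 - 0)) * poly Q (rs ! 0)" using A(1) ne by auto
      have st: "(-1) ^ ?d * (1 * (-1) ^ (?d - 1 - 0)) = (-1::real)"
      proof -
        obtain k where k: "?d = Suc k" using d1 by (cases ?d) auto
        have p1: "((-1::real) ^ k) * (-1) ^ k = 1" by (induction k) auto
        show ?thesis unfolding k using p1 by simp
      qed
      have "poly Q M * poly Q (rs ! 0) < 0" by (rule sign_prod_neg[OF st MM s])
      then show ?thesis using 0 by simp
    next
      case (Suc j)
      then have "Suc j < ?d" using i by simp
      then show ?thesis using A(2) Suc by simp
    qed
  qed
  have r0: "rs ! 0 < 0" using ne by (auto intro!: good_neg[OF g] nth_mem)
  have M0le: "M \<le> 0" using Mlt r0 by simp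
  have np: "\<forall>p\<in>set ?ps. p \<le> 0" using M0le by (auto dest: good_neg[OF g])
  obtain zs where zs: "length zs = length ?ps - 1" "degree Q = length zs" "sorted_wrt (<) zs"
    "\<forall>z\<in>set zs. z < 0" "Q = smult (lead_coeff Q) (prodl zs)"
    "\<forall>i<length zs. ?ps ! i < zs ! i \<and> zs ! i < ?ps ! Suc i"
    using gen_roots[OF sw len Q0 ch np] by blast
  have "good Q zs" unfolding good_def using zs lcq by simp
  moreover have "\<forall>i<length rs. zs ! i < rs ! i \<and> (0 < i \<longrightarrow> rs ! (i - 1) < zs ! i)"
  proof (intro allI impI)
    fix i assume i: "i < length rs"
    then have h: "?ps ! i < zs ! i \<and> zs ! i < ?ps ! Suc i" using zs(1,6) by simp
    show "zs ! i < rs ! i \<and> (0 < i \<longrightarrow> rs ! (i - 1) < zs ! i)"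
    proof (cases i)
      case 0 then show ?thesis using h by simp
    next
      case (Suc j) then show ?thesis using h by simp
    qed
  qed
  ultimately show ?thesis using zs(1) by auto
qed

lemma cfg_mid:
  assumes g: "good T rs" and ne: "rs \<noteq> []"
    and Q: "\<forall>r\<in>set rs. poly Q r = gg r * poly (pderiv T) r"
    and gpos: "\<forall>r\<in>set rs. gg r > 0" and q0: "poly Q 0 > 0" and dq: "degree Q + 1 \<le> length rs"
  shows "\<exists>zs. good Q zs \<and> length zs = length rs - 1 \<and>
     (\<forall>i<length zs. rs ! i < zs ! i \<and> zs ! i < rs ! Suc i)"
proof -
  have eps: "\<forall>r\<in>set rs. 0 < 1 * gg r" using gpos by auto
  have ee: "1 * 1 = (1::real)" by simp
  note A = alt_signs[OF g Q eps ee]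
  have Q0: "Q \<noteq> 0" using q0 by auto
  have np: "\<forall>p\<in>set rs. p \<le> 0" using good_neg[OF g] by force
  obtain zs where zs: "length zs = length rs - 1" "degree Q = length zs" "sorted_wrt (<) zs"
    "\<forall>z\<in>set zs. z < 0" "Q = smult (lead_coeff Q) (prodl zs)"
    "\<forall>i<length zs. rs ! i < zs ! i \<and> zs ! i < rs ! Suc i"
    using gen_roots[OF good_sorted[OF g] dq Q0 A(2) np] by blast
  have lc: "lead_coeff Q > 0" using lc_pos_from0[OF zs(5) zs(4) q0] .
  have "good Q zs" unfolding good_def using zs lc by simp
  then show ?thesis using zs by auto
qed

lemma cfg_both:
  assumes g: "good T rs" and ne: "rs \<noteq> []"
    and Q: "\<forall>r\<in>set rs. poly Q r = gg r * poly (pderiv T) r"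
    and gneg: "\<forall>r\<in>set rs. gg r < 0" and lcq: "lead_coeff Q > 0" and q0: "poly Q 0 > 0"
    and dq: "degree Q = Suc (length rs)"
  shows "\<exists>zs. good Q zs \<and> length zs = Suc (length rs)"
proof -
  have eps: "\<forall>r\<in>set rs. 0 < (-1) * gg r" using gneg by auto
  have ee: "(-1) * (-1) = (1::real)" by simp
  note A = alt_signs[OF g Q eps ee]
  let ?d = "length rs"
  obtain M0 where M0: "\<forall>x\<le>M0. (-1) ^ degree Q * poly Q x > 0" using minf_sign[OF lcq] by blast
  define M where "M = min M0 (rs ! 0 - 1)"
  have MM: "(-1) ^ Suc ?d * poly Q M > 0" using M0 dq unfolding M_def by auto
  have Mlt: "M < rs ! 0" unfolding M_def by simp
  let ?ps = "M # rs @ [0]"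
  have sw: "sorted_wrt (<) ?ps"
  proof -
    have "\<forall>y\<in>set rs. M < y"
    proof
      fix y assume y: "y \<in> set rs"
      then obtain j where j: "j < ?d" "y = rs ! j" by (auto simp: in_set_conv_nth)
      have "rs ! 0 \<le> rs ! j" using good_sorted[OF g] j
        by (cases j) (auto simp: sorted_wrt_nth_less less_imp_le)
      then show "M < y" using Mlt j by simp
    qed
    moreover have "M < 0" using Mlt good_neg[OF g, of "rs ! 0"] ne by force
    ultimately show ?thesis using good_sorted[OF g] good_neg[OF g] by (auto simp: sorted_wrt_append)
  qed
  have len: "degree Q + 1 \<le> length ?ps" using dq by simp
  have Q0: "Q \<noteq> 0" using lcq by auto
  have d1: "?d \<ge> 1" using ne by (cases rs) auto
  have ch: "\<forall>i. Suc i < length ?ps \<longrightarrow> poly Q (?ps ! i) * poly Q (?ps ! Suc i) < 0"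
  proof (intro allI impI)
    fix i assume i: "Suc i < length ?ps"
    show "poly Q (?ps ! i) * poly Q (?ps ! Suc i) < 0"
    proof (cases i)
      case 0
      have s: "0 < ((-1) * (-1) ^ (?d - 1 - 0)) * poly Q (rs ! 0)" using A(1) ne by auto
      have st: "(-1) ^ Suc ?d * ((-1) * (-1) ^ (?d - 1 - 0)) = (-1::real)"
      proof -
        obtain k where k: "?d = Suc k" using d1 by (cases ?d) auto
        have p1: "((-1::real) ^ k) * (-1) ^ k = 1" by (induction k) auto
        show ?thesis unfolding k using p1 by simp
      qed
      have "poly Q M * poly Q (rs ! 0) < 0" by (rule sign_prod_neg[OF st MM s])
      then show ?thesis using 0 ne by (simp add: nth_append)
    next
      case (Suc j)
      show ?thesis
      proof (cases "Suc j < ?d")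
        case True
        then show ?thesis using A(2) Suc by (simp add: nth_append)
      next
        case False
        then have jj: "j = ?d - 1" "j < ?d" using i Suc by auto
        have "0 < ((-1) * (-1) ^ (?d - 1 - j)) * poly Q (rs ! j)" using A(1) jj(2) by simp
        then have "poly Q (rs ! j) < 0" using jj by simp
        then show ?thesis using jj q0 Suc by (simp add: nth_append mult_neg_pos)
      qed
    qed
  qed
  have r0: "rs ! 0 < 0" using ne by (auto intro!: good_neg[OF g] nth_mem)
  have M0le: "M \<le> 0" using Mlt r0 by simp
  have np: "\<forall>p\<in>set ?ps. p \<le> 0" using M0le by (auto dest: good_neg[OF g])
  obtain zs where zs: "length zs = length ?ps - 1" "degree Q = length zs" "sorted_wrt (<) zs"
    "\<forall>z\<in>set zs. z < 0" "Q = smult (lead_coeff Q) (prodl zs)"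
    using gen_roots[OF sw len Q0 ch np] by blast
  have "good Q zs" unfolding good_def using zs lcq by simp
  then show ?thesis using zs(1) by auto
qed



lemma good_root: "good T rs \<Longrightarrow> r \<in> set rs \<Longrightarrow> poly T r = 0"
proof -
  assume g: "good T rs" and r: "r \<in> set rs"
  have "poly (prodl rs) r = 0" unfolding poly_prodl using r by (simp add: prod_list_zero_iff)
  then show ?thesis using good_eq[OF g] by (metis mult_zero_right poly_smult)
qed

lemma S_Gq: "n \<ge> 1 \<Longrightarrow> S_poly (Suc n) = Gq 1 1 (of_nat n) (-2) (S_poly n)"
  unfolding S_rec Lop_def Gq_def by (rule peq) (simp add: algebra_simps)

lemma Pm_Gq: "n \<ge> 2 \<Longrightarrow> P_minus (Suc n) = Gq 1 1 0 0 (S_poly n)"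
  unfolding final_formulas Gq_def by (rule peq) (simp add: algebra_simps)

lemma Pp_Gq: "n \<ge> 2 \<Longrightarrow> P_plus (Suc n) = Gq (of_nat n) (-2) 0 0 (S_poly n)"
  unfolding final_formulas Gq_def by (rule peq) (simp add: algebra_simps)

lemma P_Gq: "n \<ge> 2 \<Longrightarrow> P_poly (Suc n) = Gq (of_nat n + 1) (-1) 0 0 (S_poly n)"
  unfolding final_formulas Gq_def by (rule peq) (simp add: algebra_simps)

lemma Gq_roots: "good T rs \<Longrightarrow> \<forall>r\<in>set rs. poly (Gq a b e f T) r = (b * r + f * r^2) * poly (pderiv T) r"
  using good_root poly_Gq_root by blast

lemma S_good: "n \<ge> 2 \<Longrightarrow> \<exists>rs. good (S_poly n) rs \<and> length rs = n div 2 \<and> poly (S_poly n) 0 = 1"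
proof (induction n rule: dec_induct)
  case base
  have e: "S_poly 2 = [:1, 1:]" unfolding S2 one_pCons by simp
  have "good (S_poly 2) [-1]" unfolding good_def e by simp
  then show ?case using e by (intro exI[of _ "[-1]"]) simp
next
  case (step n)
  have n: "n \<ge> 2" by fact
  obtain rs where g: "good (S_poly n) rs" and lr: "length rs = n div 2" and p0: "poly (S_poly n) 0 = 1"
    using step.IH by blast
  let ?T = "S_poly n" and ?d = "n div 2"
  let ?Q = "Gq 1 1 (of_nat n) (-2) ?T"
  have QS: "S_poly (Suc n) = ?Q" using S_Gq n by simp
  have ne: "rs \<noteq> []" using lr n by auto
  have Qr: "\<forall>r\<in>set rs. poly ?Q r = (1 * r + (-2) * r^2) * poly (pderiv ?T) r" by (rule Gq_roots[OF g])
  have gneg: "\<forall>r\<in>set rs. 1 * r + (-2) * r^2 < 0"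
  proof
    fix r assume "r \<in> set rs"
    then have r: "r < 0" by (rule good_neg[OF g])
    have "1 * r + (-2) * r^2 = r * (1 - 2 * r)" by (simp add: algebra_simps power2_eq_square)
    also have "\<dots> < 0" using r by (intro mult_neg_pos) auto
    finally show "1 * r + (-2) * r^2 < 0" .
  qed
  have q0: "poly ?Q 0 = 1" using p0 by (simp add: poly_Gq_0)
  have dT: "degree ?T = ?d" using good_deg[OF g] lr by simp
  have cQ: "coeff ?Q (Suc ?d) = (of_nat n - 2 * of_nat ?d) * lead_coeff ?T"
    unfolding coeff_Gq_Suc using dT by (simp add: coeff_eq_0)
  show ?case
  proof (cases "even n")
    case True
    have h: "2 * ?d = n" using True by (rule even_two_times_div_two)
    have nd: "of_nat n - 2 * of_nat ?d = (0::real)" using arg_cong[OF h, of real] by simp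
    have "degree ?Q \<le> ?d" by (rule degree_Gq[OF dT]) (use nd in simp)
    then obtain zs where zs: "good ?Q zs" "length zs = length rs"
      using cfg_right[OF g ne Qr gneg] q0 lr by auto
    have "length zs = Suc n div 2" using zs(2) lr True by simp
    then show ?thesis using zs QS q0 by auto
  next
    case False
    have h: "2 * ?d + 1 = n" using False by (rule odd_two_times_div_two_succ)
    have nd: "of_nat n - 2 * of_nat ?d = (1::real)" using arg_cong[OF h, of real] by simp
    have c: "coeff ?Q (Suc ?d) = lead_coeff ?T" using cQ nd by simp
    have lcT: "lead_coeff ?T > 0" by (rule good_lc[OF g])
    have dQ: "degree ?Q = Suc ?d"
    proof (rule antisym)
      show "degree ?Q \<le> Suc ?d" by (rule degree_Gq1[OF dT])
      show "Suc ?d \<le> degree ?Q" using c lcT by (intro le_degree) (metis less_irrefl)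
    qed
    have lcQ: "lead_coeff ?Q > 0" using dQ c lcT by simp
    obtain zs where zs: "good ?Q zs" "length zs = Suc (length rs)"
      using cfg_both[OF g ne Qr gneg lcQ] q0 dQ lr by auto
    have "length zs = Suc n div 2" using zs(2) lr False by (simp add: odd_two_times_div_two_succ)
    then show ?thesis using zs QS q0 by auto
  qed
qed



lemma map_mult: "map_poly complex_of_real (p * q) = map_poly of_real p * map_poly of_real q"
  by (rule poly_eqI) (simp add: coeff_map_poly coeff_mult)

lemma map_prodl: "map_poly complex_of_real (prodl zs) = (\<Prod>x\<leftarrow>zs. [:- complex_of_real x, 1:])"
proof (induction zs)
  case Nil then show ?case by simp
next
  case (Cons a zs)
  have "map_poly complex_of_real (prodl (a # zs)) = map_poly complex_of_real [:- a, 1:] * map_poly complex_of_real (prodl zs)"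
    by (simp only: list.map prod_list.Cons map_mult)
  also have "map_poly complex_of_real [:- a, 1:] = [:- complex_of_real a, 1:]" by (simp add: map_poly_pCons)
  finally show ?case using Cons.IH by simp
qed

lemma poly_prodc: "poly (\<Prod>x\<leftarrow>zs. [:- complex_of_real x, 1:]) z = (\<Prod>x\<leftarrow>zs. z - complex_of_real x)"
  by (induction zs) (auto simp: algebra_simps)

lemma good_RZ: "good Q zs \<Longrightarrow> RZ {..<0} Q"
proof -
  assume g: "good Q zs"
  have lc: "lead_coeff Q > 0" by (rule good_lc[OF g])
  have Q: "Q = smult (lead_coeff Q) (prodl zs)" by (rule good_eq[OF g])
  show ?thesis unfolding RZ_def
  proof (intro conjI allI impI)
    show "Q \<noteq> 0" using lc by auto
    fix z :: complex assume z: "poly (map_poly complex_of_real Q) z = 0"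
    have "map_poly complex_of_real Q = smult (of_real (lead_coeff Q)) (map_poly of_real (prodl zs))"
      by (subst Q, rule map_poly_smult) simp_all
    then have "poly (map_poly complex_of_real Q) z = of_real (lead_coeff Q) * (\<Prod>x\<leftarrow>zs. z - complex_of_real x)"
      by (simp add: map_prodl poly_prodc)
    then have "(\<Prod>x\<leftarrow>zs. z - complex_of_real x) = 0" using z lc by auto
    then obtain x where "x \<in> set zs" "z = complex_of_real x" by (auto simp: prod_list_zero_iff)
    moreover have "x < 0" using good_neg[OF g] calculation(1) by simp
    ultimately show "\<exists>x\<in>{..<0}. z = complex_of_real x" by auto
  qed
qed

lemma good_zero_list: "good Q zs \<Longrightarrow> zero_list Q zs"
proof -
  assume g: "good Q zs"
  have "sorted_wrt (\<le>) zs" by (rule sorted_wrt_mono_rel[OF _ good_sorted[OF g]]) simp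
  then have "sorted zs" .
  then show ?thesis unfolding zero_list_def using good_deg[OF g] good_eq[OF g] by simp
qed

lemma main_m:
  assumes m: "m \<ge> 2"
  shows "RZ {..<0} (P_poly (Suc m)) \<and> RZ {..<0} (P_plus (Suc m)) \<and> RZ {..<0} (P_minus (Suc m)) \<and>
         alternates_left (P_poly (Suc m)) (S_poly m) \<and>
         prec (P_plus (Suc m)) (S_poly m) \<and>
         alternates_left (S_poly m) (P_minus (Suc m))"
proof -
  obtain rs where g: "good (S_poly m) rs" and lr: "length rs = m div 2"
    using S_good[OF m] by blast
  let ?T = "S_poly m" and ?d = "m div 2"
  have ne: "rs \<noteq> []" using lr m by auto
  have d1: "?d \<ge> 1" using m by simp
  then obtain k where k: "?d = Suc k" by (cases ?d) auto
  have dT: "degree ?T = ?d" using good_deg[OF g] lr by simp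
  have lcT: "lead_coeff ?T > 0" by (rule good_lc[OF g])
  have T0: "poly ?T 0 > 0" by (rule good_poly0[OF g])
  have cT: "coeff ?T ?d = lead_coeff ?T" using dT by simp
  have dm: "2 * ?d \<le> m" by simp
  let ?Q1 = "Gq (of_nat m + 1) (-1) 0 0 ?T"
  have Q1r: "\<forall>r\<in>set rs. poly ?Q1 r = (-1 * r + 0 * r^2) * poly (pderiv ?T) r" by (rule Gq_roots[OF g])
  have Q1g: "\<forall>r\<in>set rs. -1 * r + 0 * r^2 > 0" using good_neg[OF g] by auto
  have c1: "coeff ?Q1 ?d = (of_nat m + 1 - of_nat ?d) * lead_coeff ?T"
    unfolding k coeff_Gq_Suc using cT k by simp
  have pos1: "(of_nat m + 1 - of_nat ?d :: real) > 0" using dm by simp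
  have dQ1: "degree ?Q1 = ?d"
  proof (rule antisym)
    show "degree ?Q1 \<le> ?d" by (rule degree_Gq[OF dT]) simp
    have "coeff ?Q1 ?d > 0" unfolding c1 using pos1 lcT by (rule mult_pos_pos)
    then show "?d \<le> degree ?Q1" by (intro le_degree) simp
  qed
  have lc1: "lead_coeff ?Q1 > 0" using dQ1 c1 pos1 lcT by simp
  obtain z1 where z1: "good ?Q1 z1" "length z1 = length rs"
    "\<forall>i<length rs. z1 ! i < rs ! i \<and> (0 < i \<longrightarrow> rs ! (i - 1) < z1 ! i)"
    using cfg_left[OF g ne Q1r Q1g lc1] dQ1 lr by auto
  have PQ1: "P_poly (Suc m) = ?Q1" using P_Gq[OF m] by simp
  have A1: "alternates_left (P_poly (Suc m)) ?T"
  proof -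
    have h1: "degree ?Q1 = degree ?T" using dQ1 dT by simp
    have h2: "zero_list ?Q1 z1" by (rule good_zero_list[OF z1(1)])
    have h3: "zero_list ?T rs" by (rule good_zero_list[OF g])
    have h4: "\<forall>i<length z1. z1 ! i \<le> rs ! i \<and> (i + 1 < length z1 \<longrightarrow> rs ! i \<le> z1 ! (i + 1))"
    proof (intro allI impI)
      fix i assume i: "i < length z1"
      have a: "z1 ! i < rs ! i" using z1 i by auto
      have b: "i + 1 < length z1 \<Longrightarrow> rs ! i < z1 ! (i + 1)"
        using z1(2,3) by (metis Suc_eq_plus1 diff_Suc_1 zero_less_Suc)
      show "z1 ! i \<le> rs ! i \<and> (i + 1 < length z1 \<longrightarrow> rs ! i \<le> z1 ! (i + 1))"
        using a b by (auto intro: less_imp_le)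
    qed
    show ?thesis unfolding alternates_left_def PQ1 using h1 h2 h3 h4 by blast
  qed
  let ?Q2 = "Gq 1 1 0 0 ?T"
  have Q2r: "\<forall>r\<in>set rs. poly ?Q2 r = (1 * r + 0 * r^2) * poly (pderiv ?T) r" by (rule Gq_roots[OF g])
  have Q2g: "\<forall>r\<in>set rs. 1 * r + 0 * r^2 < 0" using good_neg[OF g] by auto
  have q20: "poly ?Q2 0 > 0" using T0 by (simp add: poly_Gq_0)
  have dQ2: "degree ?Q2 \<le> length rs" using degree_Gq[OF dT, of 0 0 1 1] lr by simp
  obtain z2 where z2: "good ?Q2 z2" "length z2 = length rs"
    "\<forall>i<length rs. rs ! i < z2 ! i \<and> (Suc i < length rs \<longrightarrow> z2 ! i < rs ! Suc i)"
    using cfg_right[OF g ne Q2r Q2g q20 dQ2] by auto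
  have PQ2: "P_minus (Suc m) = ?Q2" using Pm_Gq[OF m] by simp
  have A2: "alternates_left ?T (P_minus (Suc m))"
  proof -
    have h1: "degree ?T = degree ?Q2" using good_deg[OF z2(1)] z2(2) good_deg[OF g] by simp
    have h2: "zero_list ?Q2 z2" by (rule good_zero_list[OF z2(1)])
    have h3: "zero_list ?T rs" by (rule good_zero_list[OF g])
    have h4: "\<forall>i<length rs. rs ! i \<le> z2 ! i \<and> (i + 1 < length rs \<longrightarrow> z2 ! i \<le> rs ! (i + 1))"
      using z2(3) by (auto intro: less_imp_le)
    show ?thesis unfolding alternates_left_def PQ2 using h1 h2 h3 h4 by blast
  qed
  let ?Q3 = "Gq (of_nat m) (-2) 0 0 ?T"
  have Q3r: "\<forall>r\<in>set rs. poly ?Q3 r = (-2 * r + 0 * r^2) * poly (pderiv ?T) r" by (rule Gq_roots[OF g])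
  have Q3g: "\<forall>r\<in>set rs. -2 * r + 0 * r^2 > 0" using good_neg[OF g] by auto
  have q30: "poly ?Q3 0 > 0" using T0 m by (simp add: poly_Gq_0)
  have c3: "coeff ?Q3 ?d = (of_nat m - 2 * of_nat ?d) * lead_coeff ?T"
    unfolding k coeff_Gq_Suc using cT k by simp
  have PQ3: "P_plus (Suc m) = ?Q3" using Pp_Gq[OF m] by simp
  have A3: "prec (P_plus (Suc m)) ?T"
  proof (cases "even m")
    case False
    have h: "2 * ?d + 1 = m" using False by (rule odd_two_times_div_two_succ)
    have nd: "of_nat m - 2 * of_nat ?d = (1::real)" using arg_cong[OF h, of real] by simp
    have dQ3: "degree ?Q3 = ?d"
    proof (rule antisym)
      show "degree ?Q3 \<le> ?d" by (rule degree_Gq[OF dT]) simp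
      have "coeff ?Q3 ?d > 0" unfolding c3 nd using lcT by simp
      then show "?d \<le> degree ?Q3" by (intro le_degree) simp
    qed
    have lc3: "lead_coeff ?Q3 > 0" using dQ3 c3 nd lcT by simp
    obtain z3 where z3: "good ?Q3 z3" "length z3 = length rs"
      "\<forall>i<length rs. z3 ! i < rs ! i \<and> (0 < i \<longrightarrow> rs ! (i - 1) < z3 ! i)"
      using cfg_left[OF g ne Q3r Q3g lc3] dQ3 lr by auto
    have "alternates_left (P_plus (Suc m)) ?T"
    proof -
      have h1: "degree ?Q3 = degree ?T" using dQ3 dT by simp
      have h2: "zero_list ?Q3 z3" by (rule good_zero_list[OF z3(1)])
      have h3: "zero_list ?T rs" by (rule good_zero_list[OF g])
      have h4: "\<forall>i<length z3. z3 ! i \<le> rs ! i \<and> (i + 1 < length z3 \<longrightarrow> rs ! i \<le> z3 ! (i + 1))"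
      proof (intro allI impI)
        fix i assume i: "i < length z3"
        have a: "z3 ! i < rs ! i" using z3 i by auto
        have b: "i + 1 < length z3 \<Longrightarrow> rs ! i < z3 ! (i + 1)"
          using z3(2,3) by (metis Suc_eq_plus1 diff_Suc_1 zero_less_Suc)
        show "z3 ! i \<le> rs ! i \<and> (i + 1 < length z3 \<longrightarrow> rs ! i \<le> z3 ! (i + 1))"
          using a b by (auto intro: less_imp_le)
      qed
      show ?thesis unfolding alternates_left_def PQ3 using h1 h2 h3 h4 by blast
    qed
    then show ?thesis unfolding prec_def by simp
  next
    case True
    have h: "2 * ?d = m" using True by (rule even_two_times_div_two)
    have nd: "of_nat m - 2 * of_nat ?d = (0::real)" using arg_cong[OF h, of real] by simp
    have dQ3: "degree ?Q3 \<le> k"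
    proof (rule degree_le, intro allI impI)
      fix i assume i: "k < i"
      show "coeff ?Q3 i = 0"
      proof (cases "i = ?d")
        case True then show ?thesis using c3 nd by simp
      next
        case False
        then have "degree ?Q3 < i" using degree_Gq[OF dT, of 0 0 "of_nat m" "-2"] i k by simp
        then show ?thesis by (simp add: coeff_eq_0)
      qed
    qed
    have dQ3': "degree ?Q3 + 1 \<le> length rs" using dQ3 lr k by simp
    obtain z3 where z3: "good ?Q3 z3" "length z3 = length rs - 1"
      "\<forall>i<length z3. rs ! i < z3 ! i \<and> z3 ! i < rs ! Suc i"
      using cfg_mid[OF g ne Q3r Q3g q30 dQ3'] by auto
    have "interlaces (P_plus (Suc m)) ?T"
    proof -
      have h1: "degree ?T = degree ?Q3 + 1" using good_deg[OF z3(1)] z3(2) good_deg[OF g] ne by simp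
      have h2: "zero_list ?Q3 z3" by (rule good_zero_list[OF z3(1)])
      have h3: "zero_list ?T rs" by (rule good_zero_list[OF g])
      have h4: "\<forall>i<length z3. rs ! i \<le> z3 ! i \<and> z3 ! i \<le> rs ! (i + 1)"
        using z3(3) by (auto intro: less_imp_le)
      show ?thesis unfolding interlaces_def PQ3 using h1 h2 h3 h4 by blast
    qed
    then show ?thesis unfolding prec_def by simp
  qed
  have R1: "RZ {..<0} (P_poly (Suc m))" unfolding PQ1 by (rule good_RZ[OF z1(1)])
  have R2: "RZ {..<0} (P_minus (Suc m))" unfolding PQ2 by (rule good_RZ[OF z2(1)])
  have R3: "RZ {..<0} (P_plus (Suc m))"
  proof (cases "even m")
    case False
    have h: "2 * ?d + 1 = m" using False by (rule odd_two_times_div_two_succ)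
    have nd: "of_nat m - 2 * of_nat ?d = (1::real)" using arg_cong[OF h, of real] by simp
    have dQ3: "degree ?Q3 = ?d"
    proof (rule antisym)
      show "degree ?Q3 \<le> ?d" by (rule degree_Gq[OF dT]) simp
      have "coeff ?Q3 ?d > 0" unfolding c3 nd using lcT by simp
      then show "?d \<le> degree ?Q3" by (intro le_degree) simp
    qed
    have lc3: "lead_coeff ?Q3 > 0" using dQ3 c3 nd lcT by simp
    obtain z3 where z3: "good ?Q3 z3"
      using cfg_left[OF g ne Q3r Q3g lc3] dQ3 lr by auto
    show ?thesis unfolding PQ3 by (rule good_RZ[OF z3])
  next
    case True
    have h: "2 * ?d = m" using True by (rule even_two_times_div_two)
    have nd: "of_nat m - 2 * of_nat ?d = (0::real)" using arg_cong[OF h, of real] by simp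
    have dQ3: "degree ?Q3 \<le> k"
    proof (rule degree_le, intro allI impI)
      fix i assume i: "k < i"
      show "coeff ?Q3 i = 0"
      proof (cases "i = ?d")
        case True then show ?thesis using c3 nd by simp
      next
        case False
        then have "degree ?Q3 < i" using degree_Gq[OF dT, of 0 0 "of_nat m" "-2"] i k by simp
        then show ?thesis by (simp add: coeff_eq_0)
      qed
    qed
    have dQ3': "degree ?Q3 + 1 \<le> length rs" using dQ3 lr k by simp
    obtain z3 where z3: "good ?Q3 z3"
      using cfg_mid[OF g ne Q3r Q3g q30 dQ3'] by auto
    show ?thesis unfolding PQ3 by (rule good_RZ[OF z3])
  qed
  show ?thesis using R1 R2 R3 A1 A2 A3 by blast
qed

lemma good_const: "c > 0 \<Longrightarrow> good [:c:] []"
  unfolding good_def by simp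

theorem theorem8:
  fixes n :: nat
  assumes "n \<ge> 2"
  shows "RZ {..<0} (P_poly n) \<and> RZ {..<0} (P_plus n) \<and> RZ {..<0} (P_minus n) \<and>
         alternates_left (P_poly (n + 1)) (S_poly n) \<and>
         prec (P_plus (n + 1)) (S_poly n) \<and>
         alternates_left (S_poly n) (P_minus (n + 1))"
proof -
  have M: "alternates_left (P_poly (n + 1)) (S_poly n) \<and> prec (P_plus (n + 1)) (S_poly n) \<and>
         alternates_left (S_poly n) (P_minus (n + 1))" using main_m[OF assms] by simp
  have R: "RZ {..<0} (P_poly n) \<and> RZ {..<0} (P_plus n) \<and> RZ {..<0} (P_minus n)"
  proof (cases "n = 2")
    case True
    have a: "P_poly 2 = [:2:]" using P2(1) by (simp add: numeral_poly)
    have b: "P_plus 2 = [:1:]" using P2(2) by (simp add: one_pCons)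
    have c: "P_minus 2 = [:1:]" using P2(3) by (simp add: one_pCons)
    show ?thesis unfolding True a b c by (intro conjI good_RZ[OF good_const]) simp_all
  next
    case False
    then obtain m where m: "n = Suc m" "m \<ge> 2" using assms by (cases n) auto
    show ?thesis using main_m[OF m(2)] m(1) by simp
  qed
  show ?thesis using M R by blast
qed


end
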